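(* Suppose that $P[A_{1,0,y}^3]<\infty$ for all $y$ and that the random variable $\sum_{x\in\mathbb Z^d}A_{1,x,0}$ is not almost surely constant. Let $\rho^*_{t,x}=\mathbf 1_{\{|M_t|>0\}}M_{t,x}/|M_t|$ and $V_t=\frac1{|a|}\sum_{x,y\in\mathbb Z^d}\rho^*_{t-1,y}A_{t,x,y}$. Then for each $h\in(0,1)$ there is a constant $c\in(0,\infty)$ such that, almost surely, $$P\big[1-V_t^h\,\big|\,\mathcal F_{t-1}\big]\ge c\,\big|(\rho^*_{t-1})^2\big|\quad\text{for all }t\in\mathbb N^*.$$
   Context: Let $d\ge1$. For $x\in\mathbb R^d$, $|x|=\sum_i|x_i|$; for $\xi\in\mathbb R^{\mathbb Z^d}$, $|\xi|=\sum_{x}|\xi_x|$, and $\xi^2=(\xi_x^2)_x$. Let $A_t=(A_{t,x,y})_{x,y\in\mathbb Z^d}$, $t=1,2,\dots$, be i.i.d. random matrices on a probability space $(\Omega,\mathcal F,P)$ such that: (i) $A_{1,x,y}\ge0$; (ii) the columns $\{A_{1,\cdot,y}\}_{y\in\mathbb Z^d}$ are independent; (iii) $P[A_{1,x,y}^2]<\infty$ for all $x,y$; (iv) there is a nonrandom $r_A\in\mathbb N$ with $A_{1,x,y}=0$ a.s. if $|x-y|>r_A$; (v) $(A_{1,x+z,y+z})_{x,y}$ has the same law as $A_1$ for every $z\in\mathbb Z^d$; (vi) with $a_y=P[A_{1,0,y}]$, the set $\{x:\sum_y a_{x+y}a_y\neq0\}$ contains a linear basis of $\mathbb R^d$. Put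 $|a|=\sum_y a_y$, $\mathcal F_t=\sigma(A_1,\dots,A_t)$ ($\mathcal F_0$ trivial). Dual process: given a nonrandom $M_0\in[0,\infty)^{\mathbb Z^d}$ with $\{x:M_{0,x}>0\}$ finite and nonempty, $M_{t,y}=\sum_xA_{t,y,x}M_{t-1,x}$ ($t\ge1$), $|M_t|=\sum_yM_{t,y}$. *)

theory Defs
  imports "HOL-Probability.Probability"
begin

text \<open>Sites of the lattice Z^d are vectors int ^ 'd, 'd a finite index type (d = CARD('d) \<ge> 1).
  A random matrix sequence is A :: nat \<Rightarrow> 'w \<Rightarrow> int^'d \<Rightarrow> int^'d \<Rightarrow> real,
  A t \<omega> x y = A_{t,x,y}(\<omega>).\<close>

definition norm1 :: "int ^ 'd \<Rightarrow> int" where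
  "norm1 x = (\<Sum>i\<in>UNIV. \<bar>x $ i\<bar>)"

definition real_vec :: "int ^ 'd \<Rightarrow> real ^ 'd" where
  "real_vec x = (\<chi> i. real_of_int (x $ i))"

definition mat_of :: "('w \<Rightarrow> int^'d \<Rightarrow> int^'d \<Rightarrow> real) \<Rightarrow> 'w \<Rightarrow> ((int^'d) \<times> (int^'d)) \<Rightarrow> real" where
  "mat_of B \<omega> = (\<lambda>(x, y). B \<omega> x y)"

abbreviation mat_space :: "(((int^'d) \<times> (int^'d)) \<Rightarrow> real) measure" where
  "mat_space \<equiv> PiM UNIV (\<lambda>_. borel)"

abbreviation col_space :: "(int^'d \<Rightarrow> real) measure" where
  "col_space \<equiv> PiM UNIV (\<lambda>_. borel)"

definition filt :: "'w measure \<Rightarrow> (nat \<Rightarrow> 'w \<Rightarrow> int^'d \<Rightarrow> int^'d \<Rightarrow> real) \<Rightarrow> nat \<Rightarrow> 'w measure" where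
  "filt M A t = sigma (space M)
     {(\<lambda>\<omega>. A s \<omega> x y) -` B \<inter> space M | s x y B. s \<in> {1..t} \<and> B \<in> sets borel}"

definition mean_a :: "'w measure \<Rightarrow> (nat \<Rightarrow> 'w \<Rightarrow> int^'d \<Rightarrow> int^'d \<Rightarrow> real) \<Rightarrow> int^'d \<Rightarrow> real" where
  "mean_a M A y = integral\<^sup>L M (\<lambda>\<omega>. A 1 \<omega> 0 y)"

definition abs_a :: "'w measure \<Rightarrow> (nat \<Rightarrow> 'w \<Rightarrow> int^'d \<Rightarrow> int^'d \<Rightarrow> real) \<Rightarrow> real" where
  "abs_a M A = infsum (mean_a M A) UNIV"

primrec dualM :: "(nat \<Rightarrow> 'w \<Rightarrow> int^'d \<Rightarrow> int^'d \<Rightarrow> real) \<Rightarrow> (int^'d \<Rightarrow> real) \<Rightarrow> nat \<Rightarrow> 'w \<Rightarrow> int^'d \<Rightarrow> real" where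
  "dualM A M0 0 \<omega> = M0"
| "dualM A M0 (Suc t) \<omega> = (\<lambda>y. infsum (\<lambda>x. A (Suc t) \<omega> y x * dualM A M0 t \<omega> x) UNIV)"

definition totM :: "(nat \<Rightarrow> 'w \<Rightarrow> int^'d \<Rightarrow> int^'d \<Rightarrow> real) \<Rightarrow> (int^'d \<Rightarrow> real) \<Rightarrow> nat \<Rightarrow> 'w \<Rightarrow> real" where
  "totM A M0 t \<omega> = infsum (dualM A M0 t \<omega>) UNIV"

definition rho_star :: "(nat \<Rightarrow> 'w \<Rightarrow> int^'d \<Rightarrow> int^'d \<Rightarrow> real) \<Rightarrow> (int^'d \<Rightarrow> real) \<Rightarrow> nat \<Rightarrow> 'w \<Rightarrow> int^'d \<Rightarrow> real" where
  "rho_star A M0 t \<omega> x = (if totM A M0 t \<omega> > 0 then dualM A M0 t \<omega> x / totM A M0 t \<omega> else 0)"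

definition V_t :: "'w measure \<Rightarrow> (nat \<Rightarrow> 'w \<Rightarrow> int^'d \<Rightarrow> int^'d \<Rightarrow> real) \<Rightarrow> (int^'d \<Rightarrow> real) \<Rightarrow> nat \<Rightarrow> 'w \<Rightarrow> real" where
  "V_t M A M0 t \<omega> = (1 / abs_a M A) *
     infsum (\<lambda>(x, y). rho_star A M0 (t - 1) \<omega> y * A t \<omega> x y) UNIV"

end

theory Submission
  imports Defs
begin



lemma quad_bound:
  fixes h U v :: real
  assumes h0: "0 < h" and h1: "h < 1" and U: "U \<ge> 1" and v0: "0 \<le> v" and vU: "v \<le> U"
  shows "1 - v powr h + h * (v - 1) \<ge> (h * (1 - h) / 2 * U powr (h - 2)) * (v - 1)\<^sup>2"
proof -
  define k where "k = h * (1 - h) / 2 * U powr (h - 2)"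
  have Upw: "U powr (h - 2) \<le> 1" using powr_mono[of "h - 2" 0 U] U h1 by simp
  have Upos: "U powr (h - 2) > 0" using U by simp
  have k0: "0 \<le> k" "k \<le> h * (1 - h) / 2" unfolding k_def using h0 h1 Upw Upos
    by (auto intro!: mult_nonneg_nonneg simp: mult_left_le)
  define phi where "phi v = 1 - v powr h + h * (v - 1) - k * (v - 1)\<^sup>2" for v
  define dphi where "dphi v = - (h * v powr (h - 1)) + h - 2 * k * (v - 1)" for v
  have dphi: "DERIV phi x :> dphi x" if "x > 0" for x
    unfolding phi_def dphi_def using that
    by (auto intro!: derivative_eq_intros simp: power2_eq_square algebra_simps)
  have ddphi: "DERIV dphi x :> (h * (1 - h) * x powr (h - 2) - 2 * k)" if "x > 0" for x
    unfolding dphi_def using that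
    by (auto intro!: derivative_eq_intros simp: algebra_simps)
  have dd_nonneg: "h * (1 - h) * x powr (h - 2) - 2 * k \<ge> 0" if "0 < x" "x \<le> U" for x
  proof -
    have "U powr (h - 2) \<le> x powr (h - 2)" using that h1 by (intro powr_mono2') auto
    then have "h * (1 - h) * U powr (h - 2) \<le> h * (1 - h) * x powr (h - 2)"
      using h0 h1 by (intro mult_left_mono) auto
    then show ?thesis unfolding k_def by simp
  qed
  have d1: "dphi 1 = 0" unfolding dphi_def by simp
  have p1: "phi 1 = 0" unfolding phi_def by simp
  have dneg: "dphi x \<le> 0" if "0 < x" "x \<le> 1" for x
  proof -
    have "dphi x \<le> dphi 1"
      by (rule DERIV_nonneg_imp_nondecreasing[OF that(2)])
         (use that U in \<open>auto intro!: exI ddphi dd_nonneg\<close>)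
    then show ?thesis using d1 by simp
  qed
  have dpos: "dphi x \<ge> 0" if "1 \<le> x" "x \<le> U" for x
  proof -
    have "dphi 1 \<le> dphi x"
      by (rule DERIV_nonneg_imp_nondecreasing[OF that(1)])
         (use that U in \<open>auto intro!: exI ddphi dd_nonneg\<close>)
    then show ?thesis using d1 by simp
  qed
  have "phi v \<ge> 0"
  proof (cases "v \<ge> 1")
    case True
    have "phi 1 \<le> phi v"
      by (rule DERIV_nonneg_imp_nondecreasing[OF True])
         (use vU in \<open>auto intro!: exI dphi dpos\<close>)
    then show ?thesis using p1 by simp
  next
    case False
    show ?thesis
    proof (cases "v = 0")
      case True
      have hh: "(1 - h) * (2 - h) \<ge> 0" using h1 by (intro mult_nonneg_nonneg) auto
      then show ?thesis unfolding phi_def using k0 h0 h1 True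
        by (simp add: power2_eq_square algebra_simps)
    next
      case F2: False
      then have "v > 0" using v0 by simp
      have "phi v \<ge> phi 1"
        by (rule DERIV_nonpos_imp_nonincreasing) (use False \<open>v > 0\<close> in \<open>auto intro!: exI dphi dneg\<close>)
      then show ?thesis using p1 by simp
    qed
  qed
  then show ?thesis unfolding phi_def k_def by simp
qed

lemma f_nonneg:
  fixes h v :: real
  assumes h0: "0 < h" and h1: "h < 1" and v0: "0 \<le> v"
  shows "1 - v powr h + h * (v - 1) \<ge> 0"
proof -
  have "(h * (1 - h) / 2 * (max 1 v) powr (h - 2)) * (v - 1)\<^sup>2 \<ge> 0"
    using h0 h1 by (intro mult_nonneg_nonneg) auto
  also have "\<dots> \<le> 1 - v powr h + h * (v - 1)"
    by (rule quad_bound) (use assms in auto)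
  finally show ?thesis .
qed

lemma key_ineq:
  fixes h L w :: real
  assumes h0: "0 < h" and h1: "h < 1" and L: "L > 2" and w: "w \<ge> -1"
  defines "k \<equiv> h * (1 - h) / 2 * (1 + L) powr (h - 2)"
  shows "1 - (1 + w) powr h \<ge> - h * w + k * (1 - 2 / L) * w\<^sup>2 - (k / L) * w ^ 3"
proof -
  have k0: "k \<ge> 0" unfolding k_def using h0 h1 by (intro mult_nonneg_nonneg) auto
  have eq: "k * (1 - 2 / L) * w\<^sup>2 - (k / L) * w ^ 3 = k * w\<^sup>2 - (k / L) * w\<^sup>2 * (2 + w)"
    using L by (simp add: field_simps power2_eq_square power3_eq_cube)
  have fn: "1 - (1 + w) powr h + h * ((1 + w) - 1) \<ge> 0"
    by (rule f_nonneg) (use assms in auto)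
  show ?thesis
  proof (cases "w \<le> L")
    case True
    have q: "k * ((1 + w) - 1)\<^sup>2 \<le> 1 - (1 + w) powr h + h * ((1 + w) - 1)"
      unfolding k_def by (rule quad_bound) (use assms True in auto)
    have "(k / L) * w\<^sup>2 * (2 + w) \<ge> 0" using k0 L w by (intro mult_nonneg_nonneg) auto
    then have "k * (1 - 2 / L) * w\<^sup>2 - (k / L) * w ^ 3 \<le> k * w\<^sup>2" unfolding eq by linarith
    moreover have "k * w\<^sup>2 \<le> 1 - (1 + w) powr h + h * w" using q by simp
    ultimately show ?thesis by linarith
  next
    case False
    have ge: "(k / L) * w\<^sup>2 * (2 + w - L) \<ge> 0" using k0 L False by (intro mult_nonneg_nonneg) auto
    have e2: "k * (1 - 2 / L) * w\<^sup>2 - (k / L) * w ^ 3 = - ((k / L) * w\<^sup>2 * (2 + w - L))"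
      using L by (simp add: field_simps power2_eq_square power3_eq_cube)
    have "k * (1 - 2 / L) * w\<^sup>2 - (k / L) * w ^ 3 \<le> 0" unfolding e2 using ge by linarith
    then show ?thesis using fn by simp
  qed
qed



lemma infsum_nat_real_eq:
  fixes g :: "nat \<Rightarrow> real"
  shows "infsum g UNIV = (if summable (\<lambda>n. \<bar>g n\<bar>) then suminf g else 0)"
proof (cases "summable (\<lambda>n. \<bar>g n\<bar>)")
  case True
  then have s: "summable (\<lambda>n. norm (g n))" by simp
  have "(g has_sum suminf g) UNIV"
    by (rule norm_summable_imp_has_sum[OF s]) (use summable_norm_cancel[OF s] in \<open>simp add: summable_sums\<close>)
  then show ?thesis using True by (simp add: infsumI)
next
  case False
  have "\<not> g summable_on UNIV"
  proof
    assume "g summable_on UNIV"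
    then have "(\<lambda>n. norm (g n)) summable_on UNIV" using summable_on_iff_abs_summable_on_real by blast
    then have "summable (\<lambda>n. norm (g n))" by (rule summable_on_imp_summable)
    then show False using False by simp
  qed
  then show ?thesis using False by (simp add: infsum_not_exists)
qed

lemma borel_measurable_infsum_countable:
  fixes f :: "'i::countable \<Rightarrow> 'a \<Rightarrow> real"
  assumes inf: "infinite (UNIV::'i set)" and f[measurable]: "\<And>i. f i \<in> borel_measurable M"
  shows "(\<lambda>x. infsum (\<lambda>i. f i x) UNIV) \<in> borel_measurable M"
proof -
  define e where "e = from_nat_into (UNIV::'i set)"
  have bij: "bij_betw e UNIV UNIV" unfolding e_def by (rule bij_betw_from_nat_into) (use inf in auto)
  have eq: "infsum (\<lambda>i. f i x) UNIV = (if summable (\<lambda>n. \<bar>f (e n) x\<bar>) then suminf (\<lambda>n. f (e n) x) else 0)" for x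
    using infsum_reindex_bij_betw[OF bij, of "\<lambda>i. f i x"] infsum_nat_real_eq[of "\<lambda>n. f (e n) x"] by simp
  have [measurable]: "Measurable.pred M (\<lambda>x. summable (\<lambda>n. \<bar>f (e n) x\<bar>))"
  proof -
    have "{x\<in>space M. Cauchy (\<lambda>n. \<Sum>i<n. \<bar>f (e i) x\<bar>)} \<in> sets M"
      by (rule sets_Collect_Cauchy) measurable
    then show ?thesis unfolding pred_def summable_iff_convergent Cauchy_convergent_iff .
  qed
  show ?thesis unfolding eq by measurable
qed


lemma amgm3: fixes a b c :: real assumes "a\<ge>0" "b\<ge>0" "c\<ge>0" shows "a*b*c \<le> a^3+b^3+c^3"
proof -
  define m where "m = max a (max b c)"
  have m: "a \<le> m" "b \<le> m" "c \<le> m" "0 \<le> m" using assms unfolding m_def by auto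
  have "a*b*c \<le> m*m*m" using m assms by (intro mult_mono) auto
  also have "\<dots> = m^3" by (simp add: power3_eq_cube)
  also have "\<dots> \<le> a^3+b^3+c^3"
    using assms unfolding m_def by (auto simp: max_def)
  finally show ?thesis .
qed
lemma amgm2: fixes a b :: real shows "\<bar>a*b\<bar> \<le> \<bar>a\<bar>^3+\<bar>b\<bar>^3 + 1"
proof -
  define m where "m = max \<bar>a\<bar> \<bar>b\<bar>"
  have m: "\<bar>a\<bar> \<le> m" "\<bar>b\<bar> \<le> m" "0 \<le> m" unfolding m_def by auto
  have "\<bar>a*b\<bar> \<le> m*m" using m by (simp add: abs_mult mult_mono)
  also have "\<dots> \<le> m^3 + 1"
  proof (cases "m \<le> 1")
    case True then have "m*m \<le> 1" using m by (simp add: mult_le_one)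
    moreover have "0 \<le> m^3" using m by simp
    ultimately show ?thesis by linarith
  next
    case False then have "m*m \<le> m*m*m" using m by simp
    then show ?thesis by (simp add: power3_eq_cube)
  qed
  also have "\<dots> \<le> \<bar>a\<bar>^3+\<bar>b\<bar>^3 + 1" unfolding m_def by (auto simp: max_def)
  finally show ?thesis .
qed
lemma p4: fixes a b :: real assumes "a\<ge>0" "b\<ge>0" shows "(a+b)^3 \<le> 4*(a^3+b^3)"
proof -
  have "4*(a^3+b^3) - (a+b)^3 = 3*(a+b)*(a-b)^2" by (simp add: power2_eq_square power3_eq_cube algebra_simps)
  moreover have "3*(a+b)*(a-b)^2 \<ge> 0" using assms by simp
  ultimately show ?thesis by linarith
qed
lemma abs1: fixes a :: real shows "\<bar>a\<bar> \<le> \<bar>a\<bar>^3 + 1"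
proof (cases "\<bar>a\<bar> \<le> 1")
  case True then show ?thesis by (smt (verit) zero_le_power abs_ge_zero)
next
  case False then have "\<bar>a\<bar> * 1 * 1 \<le> \<bar>a\<bar> * \<bar>a\<bar> * \<bar>a\<bar>" by (intro mult_mono) auto
  then show ?thesis by (simp add: power3_eq_cube)
qed



lemma infinite_vec_int: "infinite (UNIV :: (int^'d) set)"
proof
  assume "finite (UNIV :: (int^'d) set)"
  then have "finite (range (\<lambda>n::int. (vec n :: int^'d)))" by (rule finite_subset[rotated]) auto
  moreover have "inj (\<lambda>n::int. (vec n :: int^'d))" by (auto simp: inj_def vec_eq_iff)
  ultimately have "finite (UNIV :: int set)" using finite_imageD by blast
  then show False by simp
qed

lemma infinite_vec_int2: "infinite (UNIV :: ((int^'d) \<times> (int^'d)) set)"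
  by (simp add: finite_prod infinite_vec_int)

definition Bl :: "nat \<Rightarrow> (int^'d) set" where "Bl r = {u. norm1 u \<le> int r}"

lemma finite_Bl: "finite (Bl r :: (int^'d) set)"
proof -
  let ?S = "{-int r..int r}"
  have "Bl r \<subseteq> {u::int^'d. \<forall>i. u $ i \<in> ?S}"
  proof
    fix u :: "int^'d" assume "u \<in> Bl r"
    then have n: "(\<Sum>i\<in>UNIV. \<bar>u $ i\<bar>) \<le> int r" by (simp add: Bl_def norm1_def)
    have "\<bar>u $ i\<bar> \<le> (\<Sum>i\<in>UNIV. \<bar>u $ i\<bar>)" for i by (rule member_le_sum) auto
    then have "\<bar>u $ i\<bar> \<le> int r" for i using n order_trans by blast
    then have "- int r \<le> u $ i \<and> u $ i \<le> int r" for i by (metis abs_le_iff minus_le_iff)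
    then show "u \<in> {u::int^'d. \<forall>i. u $ i \<in> ?S}" by auto
  qed
  moreover have "finite {u::int^'d. \<forall>i. u $ i \<in> ?S}"
  proof -
    have "{u::int^'d. \<forall>i. u $ i \<in> ?S} \<subseteq> vec_lambda ` (PiE UNIV (\<lambda>_. ?S))"
    proof
      fix u :: "int^'d" assume "u \<in> {u::int^'d. \<forall>i. u $ i \<in> ?S}"
      then have "vec_nth u \<in> PiE UNIV (\<lambda>_. ?S)" by auto
      then show "u \<in> vec_lambda ` (PiE UNIV (\<lambda>_. ?S))" by (intro image_eqI[of _ _ "vec_nth u"]) auto
    qed
    moreover have "finite (PiE (UNIV::'d set) (\<lambda>_. ?S))" by (intro finite_PiE) auto
    ultimately show ?thesis by (meson finite_imageI finite_subset)
  qed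
  ultimately show ?thesis by (rule finite_subset)
qed

lemma norm1_uminus: "norm1 (- u) = norm1 (u :: int^'d)"
  by (simp add: norm1_def)

lemma Bl_uminus: "u \<in> Bl r \<longleftrightarrow> - u \<in> Bl r"
  by (simp add: Bl_def norm1_uminus)


definition shm :: "int^'d \<Rightarrow> ((int^'d) \<times> (int^'d) \<Rightarrow> real) \<Rightarrow> ((int^'d) \<times> (int^'d) \<Rightarrow> real)" where
  "shm z m = (\<lambda>(x, y). m (x + z, y + z))"

lemma shm_measurable[measurable]: "shm z \<in> measurable mat_space mat_space"
  unfolding shm_def
  by (rule measurable_PiM_single') (auto simp: split_beta)

lemma infsum_finite_support:
  fixes f :: "'a \<Rightarrow> real"
  assumes "finite S" "\<And>x. x \<notin> S \<Longrightarrow> f x = 0"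
  shows "infsum f UNIV = sum f S"
proof -
  have "infsum f UNIV = infsum f S" by (rule infsum_cong_neutral) (use assms in auto)
  then show ?thesis using assms by simp
qed

locale LS = prob_space M for M :: "'w measure" +
  fixes A :: "nat \<Rightarrow> 'w \<Rightarrow> int^'d \<Rightarrow> int^'d \<Rightarrow> real"
    and M0 :: "int^'d \<Rightarrow> real" and r :: nat
  assumes indep: "indep_vars (\<lambda>_. mat_space) (\<lambda>t. mat_of (A t)) {1..}"
    and ident: "\<And>t. t \<ge> 1 \<Longrightarrow> distr M mat_space (mat_of (A t)) = distr M mat_space (mat_of (A 1))"
    and nonneg: "\<And>x y. AE \<omega> in M. A 1 \<omega> x y \<ge> 0"
    and cols: "indep_vars (\<lambda>_. col_space) (\<lambda>y \<omega>. (\<lambda>x. A 1 \<omega> x y)) UNIV"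
    and rng: "\<And>x y. norm1 (x - y) > int r \<Longrightarrow> (AE \<omega> in M. A 1 \<omega> x y = 0)"
    and shift: "\<And>z. distr M mat_space (\<lambda>\<omega>. \<lambda>(x, y). A 1 \<omega> (x + z) (y + z))
                   = distr M mat_space (mat_of (A 1))"
    and M0_nonneg: "\<And>x. M0 x \<ge> 0"
    and M0_fin: "finite {x. M0 x > 0}"
    and cube: "\<And>y. integrable M (\<lambda>\<omega>. (A 1 \<omega> 0 y) ^ 3)"
    and nonconst: "\<not> (\<exists>c. AE \<omega> in M. infsum (\<lambda>x. A 1 \<omega> x 0) UNIV = c)"
begin

lemma meas_mat[measurable]: "s \<ge> 1 \<Longrightarrow> mat_of (A s) \<in> measurable M mat_space"
  using indep unfolding indep_vars_def by auto

lemma meas_entry[measurable]: "s \<ge> 1 \<Longrightarrow> (\<lambda>\<omega>. A s \<omega> x y) \<in> borel_measurable M"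
proof -
  assume s: "s \<ge> 1"
  have "(\<lambda>\<omega>. mat_of (A s) \<omega> (x, y)) \<in> borel_measurable M"
    using measurable_compose[OF meas_mat[OF s] measurable_component_singleton[of "(x,y)" UNIV "\<lambda>_. borel"]]
    by (simp add: comp_def)
  then show ?thesis by (simp add: mat_of_def)
qed

lemma shift_eq: "(\<lambda>\<omega>. \<lambda>(x, y). A 1 \<omega> (x + z) (y + z)) = (\<lambda>\<omega>. shm z (mat_of (A 1) \<omega>))"
  by (auto simp: shm_def mat_of_def fun_eq_iff)

lemma AE_transfer:
  assumes s: "s \<ge> 1" and P: "{m \<in> space mat_space. P m} \<in> sets mat_space"
    and ae: "AE \<omega> in M. P (mat_of (A 1) \<omega>)"
  shows "AE \<omega> in M. P (mat_of (A s) \<omega>)"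
proof -
  have "AE m in distr M mat_space (mat_of (A 1)). P m"
    using ae by (subst AE_distr_iff) (use P in auto)
  then have "AE m in distr M mat_space (mat_of (A s)). P m" by (subst ident[OF s])
  then show ?thesis by (subst (asm) AE_distr_iff) (use P s in auto)
qed

lemma int_transfer:
  fixes g :: "((int^'d) \<times> (int^'d) \<Rightarrow> real) \<Rightarrow> real"
  assumes s: "s \<ge> 1" and g[measurable]: "g \<in> borel_measurable mat_space"
  shows "integrable M (\<lambda>\<omega>. g (mat_of (A s) \<omega>)) \<longleftrightarrow> integrable M (\<lambda>\<omega>. g (mat_of (A 1) \<omega>))"
    and "(\<integral>\<omega>. g (mat_of (A s) \<omega>) \<partial>M) = (\<integral>\<omega>. g (mat_of (A 1) \<omega>) \<partial>M)"
proof -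
  have m1: "mat_of (A 1) \<in> measurable M mat_space" by simp
  have ms: "mat_of (A s) \<in> measurable M mat_space" using s by simp
  have e1: "integrable (distr M mat_space (mat_of (A s))) g = integrable M (\<lambda>\<omega>. g (mat_of (A s) \<omega>))"
    by (rule integrable_distr_eq) (use ms in simp_all)
  have e2: "integrable (distr M mat_space (mat_of (A 1))) g = integrable M (\<lambda>\<omega>. g (mat_of (A 1) \<omega>))"
    by (rule integrable_distr_eq) (use m1 in simp_all)
  show "integrable M (\<lambda>\<omega>. g (mat_of (A s) \<omega>)) \<longleftrightarrow> integrable M (\<lambda>\<omega>. g (mat_of (A 1) \<omega>))"
    using e1 e2 ident[OF s] by metis
  have i1: "integral\<^sup>L (distr M mat_space (mat_of (A s))) g = (\<integral>\<omega>. g (mat_of (A s) \<omega>) \<partial>M)"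
    by (rule integral_distr) (use ms in simp_all)
  have i2: "integral\<^sup>L (distr M mat_space (mat_of (A 1))) g = (\<integral>\<omega>. g (mat_of (A 1) \<omega>) \<partial>M)"
    by (rule integral_distr) (use m1 in simp_all)
  show "(\<integral>\<omega>. g (mat_of (A s) \<omega>) \<partial>M) = (\<integral>\<omega>. g (mat_of (A 1) \<omega>) \<partial>M)"
    using i1 i2 ident[OF s] by metis
qed

lemma int_shift:
  fixes g :: "((int^'d) \<times> (int^'d) \<Rightarrow> real) \<Rightarrow> real"
  assumes g[measurable]: "g \<in> borel_measurable mat_space"
  shows "integrable M (\<lambda>\<omega>. g (shm z (mat_of (A 1) \<omega>))) \<longleftrightarrow> integrable M (\<lambda>\<omega>. g (mat_of (A 1) \<omega>))"
    and "(\<integral>\<omega>. g (shm z (mat_of (A 1) \<omega>)) \<partial>M) = (\<integral>\<omega>. g (mat_of (A 1) \<omega>) \<partial>M)"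
proof -
  have m1: "mat_of (A 1) \<in> measurable M mat_space" by simp
  have ms: "(\<lambda>\<omega>. shm z (mat_of (A 1) \<omega>)) \<in> measurable M mat_space" by simp
  have d: "distr M mat_space (\<lambda>\<omega>. shm z (mat_of (A 1) \<omega>)) = distr M mat_space (mat_of (A 1))"
    using shift[of z] unfolding shift_eq .
  have e1: "integrable (distr M mat_space (\<lambda>\<omega>. shm z (mat_of (A 1) \<omega>))) g = integrable M (\<lambda>\<omega>. g (shm z (mat_of (A 1) \<omega>)))"
    by (rule integrable_distr_eq) (use ms in simp_all)
  have e2: "integrable (distr M mat_space (mat_of (A 1))) g = integrable M (\<lambda>\<omega>. g (mat_of (A 1) \<omega>))"
    by (rule integrable_distr_eq) (use m1 in simp_all)
  show "integrable M (\<lambda>\<omega>. g (shm z (mat_of (A 1) \<omega>))) \<longleftrightarrow> integrable M (\<lambda>\<omega>. g (mat_of (A 1) \<omega>))"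
    using e1 e2 d by metis
  have i1: "integral\<^sup>L (distr M mat_space (\<lambda>\<omega>. shm z (mat_of (A 1) \<omega>))) g = (\<integral>\<omega>. g (shm z (mat_of (A 1) \<omega>)) \<partial>M)"
    by (rule integral_distr) (use ms in simp_all)
  have i2: "integral\<^sup>L (distr M mat_space (mat_of (A 1))) g = (\<integral>\<omega>. g (mat_of (A 1) \<omega>) \<partial>M)"
    by (rule integral_distr) (use m1 in simp_all)
  show "(\<integral>\<omega>. g (shm z (mat_of (A 1) \<omega>)) \<partial>M) = (\<integral>\<omega>. g (mat_of (A 1) \<omega>) \<partial>M)"
    using i1 i2 d by metis
qed

definition good :: "'w \<Rightarrow> bool" where
  "good \<omega> \<longleftrightarrow> (\<forall>s\<ge>1. \<forall>x y. A s \<omega> x y \<ge> 0 \<and> (norm1 (x - y) > int r \<longrightarrow> A s \<omega> x y = 0))"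

lemma AE_good: "AE \<omega> in M. good \<omega>"
proof -
  have "AE \<omega> in M. A s \<omega> x y \<ge> 0 \<and> (norm1 (x - y) > int r \<longrightarrow> A s \<omega> x y = 0)"
    if s: "s \<ge> 1" for s x y
  proof -
    have m: "{m \<in> space mat_space. m (x, y) \<ge> (0::real)} \<in> sets mat_space"
      "{m \<in> space mat_space. m (x, y) = (0::real)} \<in> sets mat_space" by measurable
    have a1: "AE \<omega> in M. mat_of (A s) \<omega> (x, y) \<ge> 0"
      by (rule AE_transfer[OF s m(1)]) (use nonneg[of x y] in \<open>simp add: mat_of_def\<close>)
    have a2: "norm1 (x - y) > int r \<Longrightarrow> AE \<omega> in M. mat_of (A s) \<omega> (x, y) = 0"
      by (rule AE_transfer[OF s m(2)]) (use rng[of x y] in \<open>simp add: mat_of_def\<close>)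
    show ?thesis using a1 a2 by (cases "norm1 (x - y) > int r") (auto simp: mat_of_def)
  qed
  then have "\<forall>s x y. AE \<omega> in M. s \<ge> 1 \<longrightarrow> A s \<omega> x y \<ge> 0 \<and> (norm1 (x - y) > int r \<longrightarrow> A s \<omega> x y = 0)"
    by auto
  then show ?thesis unfolding good_def by (simp add: AE_all_countable)
qed


primrec Ks :: "nat \<Rightarrow> (int^'d) set" where
  "Ks 0 = {x. M0 x > 0}"
| "Ks (Suc s) = (\<lambda>p. fst p + snd p) ` (Ks s \<times> Bl r)"

primrec Dm :: "nat \<Rightarrow> 'w \<Rightarrow> int^'d \<Rightarrow> real" where
  "Dm 0 \<omega> = M0"
| "Dm (Suc s) \<omega> = (\<lambda>y. \<Sum>x\<in>Ks s. A (Suc s) \<omega> y x * Dm s \<omega> x)"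

definition "Tm s \<omega> = (\<Sum>x\<in>Ks s. Dm s \<omega> x)"
definition "Rm s \<omega> x = (if Tm s \<omega> > 0 then Dm s \<omega> x / Tm s \<omega> else 0)"
definition "Rc s \<omega> x = max 0 (min 1 (Rm s \<omega> x))"

lemma finite_Ks: "finite (Ks s)"
  by (induction s) (auto simp: M0_fin finite_Bl)

lemma Rc_bounds: "0 \<le> Rc s \<omega> x" "Rc s \<omega> x \<le> 1"
  by (auto simp: Rc_def)

lemma good_Dm:
  assumes g: "good \<omega>"
  shows "Dm s \<omega> x \<ge> 0 \<and> (x \<notin> Ks s \<longrightarrow> Dm s \<omega> x = 0)"
proof (induction s arbitrary: x)
  case 0
  then show ?case using M0_nonneg[of x] by auto
next
  case (Suc s)
  have pos: "A (Suc s) \<omega> y z \<ge> 0" for y z using g unfolding good_def by auto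
  have "Dm (Suc s) \<omega> x \<ge> 0"
    using Suc.IH pos by (auto intro!: sum_nonneg)
  moreover have "Dm (Suc s) \<omega> x = 0" if nx: "x \<notin> Ks (Suc s)"
  proof -
    have "A (Suc s) \<omega> x z = 0" if z: "z \<in> Ks s" for z
    proof -
      have "x - z \<notin> Bl r"
      proof
        assume "x - z \<in> Bl r"
        then have "x \<in> (\<lambda>p. fst p + snd p) ` (Ks s \<times> Bl r)"
          using z by (intro image_eqI[of _ _ "(z, x - z)"]) auto
        then show False using nx by simp
      qed
      then have "norm1 (x - z) > int r" by (simp add: Bl_def)
      then show ?thesis using g unfolding good_def by auto
    qed
    then show ?thesis by simp
  qed
  ultimately show ?case by blast
qed

lemma good_dualM:
  assumes g: "good \<omega>"
  shows "dualM A M0 s \<omega> = Dm s \<omega>"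
proof (induction s)
  case 0
  then show ?case by simp
next
  case (Suc s)
  show ?case
  proof
    fix y
    have "dualM A M0 (Suc s) \<omega> y = infsum (\<lambda>x. A (Suc s) \<omega> y x * Dm s \<omega> x) UNIV"
      using Suc.IH by simp
    also have "\<dots> = (\<Sum>x\<in>Ks s. A (Suc s) \<omega> y x * Dm s \<omega> x)"
      by (rule infsum_finite_support) (use finite_Ks good_Dm[OF g] in auto)
    finally show "dualM A M0 (Suc s) \<omega> y = Dm (Suc s) \<omega> y" by simp
  qed
qed

lemma good_totM:
  assumes g: "good \<omega>"
  shows "totM A M0 s \<omega> = Tm s \<omega>"
  unfolding totM_def Tm_def good_dualM[OF g]
  by (rule infsum_finite_support) (use finite_Ks good_Dm[OF g] in auto)

lemma good_Rm:
  assumes g: "good \<omega>"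
  shows "0 \<le> Rm s \<omega> x \<and> Rm s \<omega> x \<le> 1"
proof (cases "Tm s \<omega> > 0")
  case True
  have d0: "Dm s \<omega> x \<ge> 0" using good_Dm[OF g] by auto
  have "Dm s \<omega> x \<le> Tm s \<omega>"
  proof (cases "x \<in> Ks s")
    case True
    then show ?thesis unfolding Tm_def
      by (rule member_le_sum) (use finite_Ks good_Dm[OF g] in auto)
  next
    case False
    then show ?thesis using good_Dm[OF g, of s x] \<open>Tm s \<omega> > 0\<close> by simp
  qed
  then show ?thesis using True d0 by (simp add: Rm_def)
next
  case False
  then show ?thesis by (simp add: Rm_def)
qed

lemma good_Rc: "good \<omega> \<Longrightarrow> Rc s \<omega> x = Rm s \<omega> x"
  using good_Rm[of \<omega> s x] by (simp add: Rc_def)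

lemma good_rho:
  assumes g: "good \<omega>"
  shows "rho_star A M0 s \<omega> x = Rc s \<omega> x"
  unfolding rho_star_def good_Rc[OF g] Rm_def good_totM[OF g] good_dualM[OF g] by simp

lemma good_Rc_out: "good \<omega> \<Longrightarrow> x \<notin> Ks s \<Longrightarrow> Rc s \<omega> x = 0"
  using good_Dm[of \<omega> s x] by (simp add: good_Rc Rm_def)

lemma good_Rc_sum:
  assumes g: "good \<omega>" and T: "Tm s \<omega> > 0"
  shows "(\<Sum>x\<in>Ks s. Rc s \<omega> x) = 1"
proof -
  have "(\<Sum>x\<in>Ks s. Rc s \<omega> x) = (\<Sum>x\<in>Ks s. Dm s \<omega> x / Tm s \<omega>)"
    using T by (simp add: good_Rc[OF g] Rm_def)
  also have "\<dots> = Tm s \<omega> / Tm s \<omega>" unfolding Tm_def by (rule sum_divide_distrib[symmetric])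
  finally show ?thesis using T by simp
qed

lemma Rc_zero: "\<not> Tm s \<omega> > 0 \<Longrightarrow> Rc s \<omega> x = 0"
  by (simp add: Rc_def Rm_def)



definition "gens s = {(\<lambda>\<omega>. A s' \<omega> x y) -` B \<inter> space M | s' x y B. s' \<in> {1..s} \<and> B \<in> sets borel}"

lemma gens_Pow: "gens s \<subseteq> Pow (space M)" unfolding gens_def by auto

lemma space_filt: "space (filt M A s) = space M"
  unfolding filt_def using gens_Pow[of s] unfolding gens_def by (intro space_measure_of) auto

lemma sets_filt: "sets (filt M A s) = sigma_sets (space M) (gens s)"
  unfolding filt_def gens_def using gens_Pow[of s] unfolding gens_def by (intro sets_measure_of) auto

lemma filt_entry[measurable]:
  assumes "1 \<le> s'" "s' \<le> s"
  shows "(\<lambda>\<omega>. A s' \<omega> x y) \<in> borel_measurable (filt M A s)"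
proof (rule measurableI)
  fix B :: "real set" assume "B \<in> sets borel"
  then have "(\<lambda>\<omega>. A s' \<omega> x y) -` B \<inter> space M \<in> gens s"
    unfolding gens_def using assms
    by (intro CollectI exI[of _ s'] exI[of _ x] exI[of _ y] exI[of _ B]) auto
  then show "(\<lambda>\<omega>. A s' \<omega> x y) -` B \<inter> space (filt M A s) \<in> sets (filt M A s)"
    unfolding sets_filt space_filt by (rule sigma_sets.Basic)
qed auto

lemma subalg_filt: "subalgebra M (filt M A s)"
  unfolding subalgebra_def space_filt sets_filt
proof (intro conjI refl sets.sigma_sets_subset)
  show "gens s \<subseteq> sets M"
  proof
    fix G assume "G \<in> gens s"
    then obtain s' x y B where G: "G = (\<lambda>\<omega>. A s' \<omega> x y) -` B \<inter> space M" "s' \<in> {1..s}" "B \<in> sets borel"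
      unfolding gens_def by blast
    then show "G \<in> sets M" using measurable_sets[OF meas_entry[of s' x y] G(3)] by auto
  qed
qed

lemma filt_mono_meas:
  assumes "s \<le> s'" "f \<in> borel_measurable (filt M A s)"
  shows "f \<in> borel_measurable (filt M A s')"
proof (rule measurable_from_subalg[OF _ assms(2)])
  have "gens s \<subseteq> gens s'"
  proof
    fix G assume "G \<in> gens s"
    then obtain s'' x y B where G: "G = (\<lambda>\<omega>. A s'' \<omega> x y) -` B \<inter> space M" "s'' \<in> {1..s}" "B \<in> sets borel"
      unfolding gens_def by blast
    then show "G \<in> gens s'" unfolding gens_def using assms(1)
      by (intro CollectI exI[of _ s''] exI[of _ x] exI[of _ y] exI[of _ B]) auto
  qed
  then show "subalgebra (filt M A s') (filt M A s)"
    unfolding subalgebra_def space_filt sets_filt using sigma_sets_mono'[of "gens s" "gens s'" "space M"] by simp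
qed


lemma Dm_filt[measurable]: "(\<lambda>\<omega>. Dm s \<omega> y) \<in> borel_measurable (filt M A s)"
proof (induction s arbitrary: y)
  case 0
  then show ?case by simp
next
  case (Suc s)
  have [measurable]: "(\<lambda>\<omega>. Dm s \<omega> x) \<in> borel_measurable (filt M A (Suc s))" for x
    by (rule filt_mono_meas[OF _ Suc.IH]) simp
  have [measurable]: "(\<lambda>\<omega>. A (Suc s) \<omega> y x) \<in> borel_measurable (filt M A (Suc s))" for x
    by (rule filt_entry) auto
  show ?case by simp
qed

lemma Tm_filt[measurable]: "Tm s \<in> borel_measurable (filt M A s)"
  unfolding Tm_def[abs_def] by measurable

lemma Rc_filt[measurable]: "(\<lambda>\<omega>. Rc s \<omega> x) \<in> borel_measurable (filt M A s)"
  unfolding Rc_def Rm_def by measurable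

lemma dualM_meas[measurable]: "(\<lambda>\<omega>. dualM A M0 s \<omega> y) \<in> borel_measurable M"
proof (induction s arbitrary: y)
  case 0
  then show ?case by simp
next
  case (Suc s)
  have "(\<lambda>\<omega>. infsum (\<lambda>x. A (Suc s) \<omega> y x * dualM A M0 s \<omega> x) UNIV) \<in> borel_measurable M"
    by (rule borel_measurable_infsum_countable[OF infinite_vec_int]) (use Suc.IH in simp)
  then show ?case by simp
qed

lemma totM_meas[measurable]: "totM A M0 s \<in> borel_measurable M"
  unfolding totM_def[abs_def]
  by (rule borel_measurable_infsum_countable[OF infinite_vec_int]) simp

lemma rho_meas[measurable]: "(\<lambda>\<omega>. rho_star A M0 s \<omega> x) \<in> borel_measurable M"
  unfolding rho_star_def by measurable

lemma V_meas[measurable]: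
  assumes t: "t \<ge> 1"
  shows "V_t M A M0 t \<in> borel_measurable M"
proof -
  have [measurable]: "(\<lambda>\<omega>. A t \<omega> x y) \<in> borel_measurable M" for x y using t by simp
  have "(\<lambda>\<omega>. infsum (\<lambda>p. (\<lambda>(x, y). rho_star A M0 (t - 1) \<omega> y * A t \<omega> x y) p) UNIV) \<in> borel_measurable M"
    by (rule borel_measurable_infsum_countable[OF infinite_vec_int2]) (simp add: split_beta)
  then show ?thesis unfolding V_t_def[abs_def] by simp
qed


definition "Ev s = {mat_of (A s) -` C \<inter> space M | C. C \<in> sets mat_space}"

lemma Ev_Int_stable: "Int_stable (Ev s)"
  unfolding Int_stable_def Ev_def
proof (intro ballI)
  fix a b assume "a \<in> {mat_of (A s) -` C \<inter> space M |C. C \<in> sets mat_space}"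
    "b \<in> {mat_of (A s) -` C \<inter> space M |C. C \<in> sets mat_space}"
  then obtain C1 C2 where "a = mat_of (A s) -` C1 \<inter> space M" "C1 \<in> sets mat_space"
    "b = mat_of (A s) -` C2 \<inter> space M" "C2 \<in> sets mat_space" by blast
  then show "a \<inter> b \<in> {mat_of (A s) -` C \<inter> space M |C. C \<in> sets mat_space}"
    by (intro CollectI exI[of _ "C1 \<inter> C2"]) auto
qed

lemma gens_Ev:
  assumes "G \<in> gens s"
  shows "\<exists>s'\<in>{1..s}. G \<in> Ev s'"
proof -
  obtain s' x y B where G: "G = (\<lambda>\<omega>. A s' \<omega> x y) -` B \<inter> space M" "s' \<in> {1..s}" "B \<in> sets borel"
    using assms unfolding gens_def by blast
  have C: "(\<lambda>m. m (x, y)) -` B \<inter> space mat_space \<in> sets mat_space"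
    using measurable_sets[OF measurable_component_singleton[of "(x,y)" UNIV "\<lambda>_. (borel :: real measure)"] G(3)] by simp
  have "G = mat_of (A s') -` ((\<lambda>m. m (x, y)) -` B \<inter> space mat_space) \<inter> space M"
    using G(1) by (auto simp: mat_of_def space_PiM)
  then have "G \<in> Ev s'" unfolding Ev_def using C by blast
  then show ?thesis using G(2) by blast
qed

lemma indep_F:
  assumes t: "t \<ge> 1"
  shows "indep_set (sets (filt M A (t - 1))) (sigma_sets (space M) (Ev t))"
proof -
  have i0: "indep_sets Ev {1..}" using indep unfolding indep_vars_def2 Ev_def by blast
  define I where "I = (\<lambda>b::bool. if b then {1..<t} else {t})"
  have "indep_sets Ev (\<Union>j. I j)"
    by (rule indep_sets_mono_index[OF _ i0]) (use t in \<open>auto simp: I_def\<close>)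
  then have i1: "indep_sets (\<lambda>j. sigma_sets (space M) (\<Union>i\<in>I j. Ev i)) UNIV"
    by (intro indep_sets_collect_sigma Ev_Int_stable) (auto simp: I_def disjoint_family_on_def)
  show ?thesis
    unfolding indep_set_def
  proof (rule indep_sets_mono_sets[OF i1])
    fix j :: bool
    show "case_bool (sets (filt M A (t - 1))) (sigma_sets (space M) (Ev t)) j
          \<subseteq> sigma_sets (space M) (\<Union>i\<in>I j. Ev i)"
    proof (cases j)
      case True
      have "gens (t - 1) \<subseteq> (\<Union>i\<in>{1..<t}. Ev i)"
      proof
        fix G assume "G \<in> gens (t - 1)"
        then obtain s' where "s' \<in> {1..t-1}" "G \<in> Ev s'" using gens_Ev by blast
        then show "G \<in> (\<Union>i\<in>{1..<t}. Ev i)" using t by auto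
      qed
      then show ?thesis using True unfolding sets_filt I_def by (simp add: sigma_sets_subseteq)
    next
      case False
      then show ?thesis by (simp add: I_def)
    qed
  qed
qed


lemma indep_prod:
  fixes g :: "((int^'d) \<times> (int^'d) \<Rightarrow> real) \<Rightarrow> real"
  assumes t: "t \<ge> 1" and Phi: "Phi \<in> borel_measurable (filt M A (t - 1))" and B: "\<And>\<omega>. \<bar>Phi \<omega>\<bar> \<le> B"
    and g[measurable]: "g \<in> borel_measurable mat_space" and gi: "integrable M (\<lambda>\<omega>. g (mat_of (A t) \<omega>))"
  shows "integrable M (\<lambda>\<omega>. Phi \<omega> * g (mat_of (A t) \<omega>))"
    and "(\<integral>\<omega>. Phi \<omega> * g (mat_of (A t) \<omega>) \<partial>M) = (\<integral>\<omega>. Phi \<omega> \<partial>M) * (\<integral>\<omega>. g (mat_of (A t) \<omega>) \<partial>M)"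
proof -
  have PhiM[measurable]: "Phi \<in> borel_measurable M" by (rule measurable_from_subalg[OF subalg_filt Phi])
  have gM[measurable]: "(\<lambda>\<omega>. g (mat_of (A t) \<omega>)) \<in> borel_measurable M" using t by simp
  have PhiI: "integrable M Phi" by (rule integrable_const_bound[of _ B]) (use B in auto)
  have "indep_var borel Phi borel (\<lambda>\<omega>. g (mat_of (A t) \<omega>))"
    unfolding indep_var_eq
  proof (intro conjI PhiM gM)
    have s1: "sigma_sets (space M) {Phi -` X \<inter> space M |X. X \<in> sets borel} \<subseteq> sets (filt M A (t - 1))"
    proof -
      have "{Phi -` X \<inter> space M |X. X \<in> sets borel} \<subseteq> sets (filt M A (t - 1))"
        using measurable_sets[OF Phi] unfolding space_filt by blast
      from sets.sigma_sets_subset[OF this] show ?thesis unfolding space_filt .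
    qed
    have s2: "sigma_sets (space M) {(\<lambda>\<omega>. g (mat_of (A t) \<omega>)) -` X \<inter> space M |X. X \<in> sets borel}
       \<subseteq> sigma_sets (space M) (Ev t)"
    proof (rule sigma_sets_subseteq, safe)
      fix X :: "real set" assume X: "X \<in> sets borel"
      have "g -` X \<inter> space mat_space \<in> sets mat_space" using measurable_sets[OF g X] .
      moreover have "(\<lambda>\<omega>. g (mat_of (A t) \<omega>)) -` X \<inter> space M
          = mat_of (A t) -` (g -` X \<inter> space mat_space) \<inter> space M"
        by (auto simp: space_PiM)
      ultimately show "(\<lambda>\<omega>. g (mat_of (A t) \<omega>)) -` X \<inter> space M \<in> Ev t"
        unfolding Ev_def by blast
    qed
    show "indep_set (sigma_sets (space M) {Phi -` X \<inter> space M |X. X \<in> sets borel})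
        (sigma_sets (space M) {(\<lambda>\<omega>. g (mat_of (A t) \<omega>)) -` X \<inter> space M |X. X \<in> sets borel})"
      using indep_F[OF t] unfolding indep_set_def
      by (rule indep_sets_mono_sets) (use s1 s2 in \<open>auto split: bool.split\<close>)
  qed
  then show "integrable M (\<lambda>\<omega>. Phi \<omega> * g (mat_of (A t) \<omega>))"
    and "(\<integral>\<omega>. Phi \<omega> * g (mat_of (A t) \<omega>) \<partial>M) = (\<integral>\<omega>. Phi \<omega> \<partial>M) * (\<integral>\<omega>. g (mat_of (A t) \<omega>) \<partial>M)"
    using indep_var_integrable indep_var_lebesgue_integral PhiI gi by blast+
qed

lemma condexp_indep:
  fixes g :: "((int^'d) \<times> (int^'d) \<Rightarrow> real) \<Rightarrow> real"
  assumes t: "t \<ge> 1" and Phi[measurable]: "Phi \<in> borel_measurable (filt M A (t - 1))" and B: "\<And>\<omega>. \<bar>Phi \<omega>\<bar> \<le> B"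
    and g[measurable]: "g \<in> borel_measurable mat_space" and gi: "integrable M (\<lambda>\<omega>. g (mat_of (A t) \<omega>))"
  shows "AE \<omega> in M. real_cond_exp M (filt M A (t - 1)) (\<lambda>\<omega>. Phi \<omega> * g (mat_of (A t) \<omega>)) \<omega>
           = Phi \<omega> * (\<integral>\<omega>. g (mat_of (A t) \<omega>) \<partial>M)"
proof -
  interpret S: finite_measure_subalgebra M "filt M A (t - 1)"
    by unfold_locales (rule subalg_filt)
  have PhiM[measurable]: "Phi \<in> borel_measurable M" by (rule measurable_from_subalg[OF subalg_filt Phi])
  have PhiI: "integrable M Phi" by (rule integrable_const_bound[of _ B]) (use B in auto)
  show ?thesis
  proof (rule S.real_cond_exp_charact)
    fix G assume G: "G \<in> sets (filt M A (t - 1))"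
    have GM: "G \<in> sets M" using subalg_filt G unfolding subalgebra_def by auto
    have PG[measurable]: "(\<lambda>\<omega>. indicator G \<omega> * Phi \<omega>) \<in> borel_measurable (filt M A (t - 1))"
      using G by measurable
    have BG: "\<bar>indicator G \<omega> * Phi \<omega>\<bar> \<le> \<bar>B\<bar>" for \<omega>
      using B[of \<omega>] by (auto simp: indicator_def)
    have "(\<integral>\<omega>\<in>G. Phi \<omega> * g (mat_of (A t) \<omega>) \<partial>M) = (\<integral>\<omega>. (indicator G \<omega> * Phi \<omega>) * g (mat_of (A t) \<omega>) \<partial>M)"
      unfolding set_lebesgue_integral_def by (simp add: mult.assoc)
    also have "\<dots> = (\<integral>\<omega>. indicator G \<omega> * Phi \<omega> \<partial>M) * (\<integral>\<omega>. g (mat_of (A t) \<omega>) \<partial>M)"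
      by (rule indep_prod(2)[OF t PG BG g gi])
    also have "\<dots> = (\<integral>\<omega>. (indicator G \<omega> * Phi \<omega>) * (\<integral>\<omega>. g (mat_of (A t) \<omega>) \<partial>M) \<partial>M)"
      by (rule integral_mult_left_zero[symmetric])
    also have "\<dots> = (\<integral>\<omega>. indicator G \<omega> * (Phi \<omega> * (\<integral>\<omega>. g (mat_of (A t) \<omega>) \<partial>M)) \<partial>M)"
      by (simp add: mult.assoc)
    also have "\<dots> = (\<integral>\<omega>\<in>G. Phi \<omega> * (\<integral>\<omega>. g (mat_of (A t) \<omega>) \<partial>M) \<partial>M)"
      unfolding set_lebesgue_integral_def by simp
    finally show "(\<integral>\<omega>\<in>G. Phi \<omega> * g (mat_of (A t) \<omega>) \<partial>M) = (\<integral>\<omega>\<in>G. Phi \<omega> * (\<integral>\<omega>. g (mat_of (A t) \<omega>) \<partial>M) \<partial>M)" .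
  next
    show "integrable M (\<lambda>\<omega>. Phi \<omega> * g (mat_of (A t) \<omega>))" by (rule indep_prod(1)[OF t Phi B g gi])
    show "integrable M (\<lambda>\<omega>. Phi \<omega> * (\<integral>\<omega>. g (mat_of (A t) \<omega>) \<partial>M))" using PhiI by simp
    show "(\<lambda>\<omega>. Phi \<omega> * (\<integral>\<omega>. g (mat_of (A t) \<omega>) \<partial>M)) \<in> borel_measurable (filt M A (t - 1))"
      by (rule borel_measurable_times[OF Phi borel_measurable_const])
  qed
qed


definition "aa = abs_a M A"
definition "colsum y m = (\<Sum>u\<in>Bl r. m (y + u, y))"
definition "xf y m = colsum y m / aa - 1"
definition "colf y c = (\<Sum>u\<in>Bl r. c (y + u)) / aa - 1"

lemma xf_colf: "xf y m = colf y (\<lambda>x. m (x, y))"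
  by (simp add: xf_def colf_def colsum_def)

lemma colsum_meas[measurable]: "colsum y \<in> borel_measurable mat_space"
  unfolding colsum_def[abs_def] by measurable

lemma xf_meas[measurable]: "xf y \<in> borel_measurable mat_space"
  unfolding xf_def[abs_def] by measurable

lemma colf_meas[measurable]: "colf y \<in> borel_measurable col_space"
  unfolding colf_def[abs_def] by measurable

lemma xf_shift: "xf 0 (shm a m) = xf a m"
  by (simp add: xf_def colsum_def shm_def add.commute)

definition L3 :: "('w \<Rightarrow> real) \<Rightarrow> bool" where "L3 f \<longleftrightarrow> f \<in> borel_measurable M \<and> integrable M (\<lambda>\<omega>. \<bar>f \<omega>\<bar> ^ 3)"

lemma L3_const: "L3 (\<lambda>_. c)"
  unfolding L3_def by simp

lemma L3_add:
  assumes "L3 f" "L3 g" shows "L3 (\<lambda>\<omega>. f \<omega> + g \<omega>)"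
  unfolding L3_def
proof
  show m: "(\<lambda>\<omega>. f \<omega> + g \<omega>) \<in> borel_measurable M" using assms unfolding L3_def by auto
  have i: "integrable M (\<lambda>\<omega>. 4 * (\<bar>f \<omega>\<bar> ^ 3 + \<bar>g \<omega>\<bar> ^ 3))" using assms unfolding L3_def by auto
  show "integrable M (\<lambda>\<omega>. \<bar>f \<omega> + g \<omega>\<bar> ^ 3)"
  proof (rule Bochner_Integration.integrable_bound[OF i])
    show "(\<lambda>\<omega>. \<bar>f \<omega> + g \<omega>\<bar> ^ 3) \<in> borel_measurable M" using m by measurable
    show "AE \<omega> in M. norm (\<bar>f \<omega> + g \<omega>\<bar> ^ 3) \<le> norm (4 * (\<bar>f \<omega>\<bar> ^ 3 + \<bar>g \<omega>\<bar> ^ 3))"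
    proof (intro AE_I2)
      fix \<omega>
      have "\<bar>f \<omega> + g \<omega>\<bar> ^ 3 \<le> (\<bar>f \<omega>\<bar> + \<bar>g \<omega>\<bar>) ^ 3" by (intro power_mono abs_triangle_ineq) simp
      also have "\<dots> \<le> 4 * (\<bar>f \<omega>\<bar> ^ 3 + \<bar>g \<omega>\<bar> ^ 3)" by (rule p4) auto
      finally show "norm (\<bar>f \<omega> + g \<omega>\<bar> ^ 3) \<le> norm (4 * (\<bar>f \<omega>\<bar> ^ 3 + \<bar>g \<omega>\<bar> ^ 3))" by simp
    qed
  qed
qed

lemma L3_cmult:
  assumes "L3 f" shows "L3 (\<lambda>\<omega>. c * f \<omega>)"
  using assms unfolding L3_def by (auto simp: abs_mult power_mult_distrib)

lemma L3_sum:
  assumes "\<And>i. i \<in> I \<Longrightarrow> L3 (f i)" shows "L3 (\<lambda>\<omega>. \<Sum>i\<in>I. f i \<omega>)"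
  using assms
proof (induction I rule: infinite_finite_induct)
  case (infinite I) then show ?case by (simp add: L3_const)
next
  case empty then show ?case by (simp add: L3_const)
next
  case (insert i I) then show ?case by (simp add: L3_add)
qed

lemma L3_int: assumes "L3 f" shows "integrable M f"
proof -
  have i: "integrable M (\<lambda>\<omega>. \<bar>f \<omega>\<bar> ^ 3 + 1)" using assms unfolding L3_def by auto
  show ?thesis
    by (rule Bochner_Integration.integrable_bound[OF i]) (use assms abs1 in \<open>auto simp: L3_def\<close>)
qed

lemma L3_prod2: assumes "L3 f" "L3 g" shows "integrable M (\<lambda>\<omega>. f \<omega> * g \<omega>)"
proof -
  have i: "integrable M (\<lambda>\<omega>. \<bar>f \<omega>\<bar> ^ 3 + \<bar>g \<omega>\<bar> ^ 3 + 1)" using assms unfolding L3_def by auto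
  show ?thesis
    by (rule Bochner_Integration.integrable_bound[OF i]) (use assms amgm2 in \<open>auto simp: L3_def\<close>)
qed

lemma L3_prod3: assumes "L3 f" "L3 g" "L3 k" shows "integrable M (\<lambda>\<omega>. f \<omega> * g \<omega> * k \<omega>)"
proof -
  have i: "integrable M (\<lambda>\<omega>. \<bar>f \<omega>\<bar> ^ 3 + \<bar>g \<omega>\<bar> ^ 3 + \<bar>k \<omega>\<bar> ^ 3)" using assms unfolding L3_def by auto
  have b: "\<bar>f \<omega> * g \<omega> * k \<omega>\<bar> \<le> \<bar>f \<omega>\<bar> ^ 3 + \<bar>g \<omega>\<bar> ^ 3 + \<bar>k \<omega>\<bar> ^ 3" for \<omega>
    using amgm3[of "\<bar>f \<omega>\<bar>" "\<bar>g \<omega>\<bar>" "\<bar>k \<omega>\<bar>"] by (simp add: abs_mult)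
  show ?thesis
    by (rule Bochner_Integration.integrable_bound[OF i]) (use assms b in \<open>auto simp: L3_def\<close>)
qed

lemma L3_entry: "L3 (\<lambda>\<omega>. A 1 \<omega> x y)"
  unfolding L3_def
proof
  show "(\<lambda>\<omega>. A 1 \<omega> x y) \<in> borel_measurable M" by simp
  define g where "g = (\<lambda>m::((int^'d) \<times> (int^'d) \<Rightarrow> real). \<bar>m (0, y - x)\<bar> ^ 3)"
  have g[measurable]: "g \<in> borel_measurable mat_space" unfolding g_def by measurable
  have "integrable M (\<lambda>\<omega>. \<bar>(A 1 \<omega> 0 (y - x)) ^ 3\<bar>)" using cube[of "y - x"] by (rule integrable_abs)
  then have "integrable M (\<lambda>\<omega>. g (mat_of (A 1) \<omega>))" by (simp add: g_def mat_of_def power_abs)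
  then have "integrable M (\<lambda>\<omega>. g (shm x (mat_of (A 1) \<omega>)))" using int_shift(1)[OF g, of x] by simp
  then show "integrable M (\<lambda>\<omega>. \<bar>A 1 \<omega> x y\<bar> ^ 3)" by (simp add: g_def shm_def mat_of_def)
qed

lemma L3_xf: "L3 (\<lambda>\<omega>. xf y (mat_of (A 1) \<omega>))"
proof -
  have "L3 (\<lambda>\<omega>. (1 / aa) * (\<Sum>u\<in>Bl r. A 1 \<omega> (y + u) y) + (-1))"
    by (intro L3_add L3_cmult L3_sum L3_entry L3_const)
  then show ?thesis by (simp add: xf_def colsum_def mat_of_def)
qed


abbreviation "Y1 \<equiv> mat_of (A 1)"

lemma mean_entry: "(\<integral>\<omega>. A 1 \<omega> (a + u) a \<partial>M) = mean_a M A (- u)"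
proof -
  define g1 where "g1 = (\<lambda>m::((int^'d) \<times> (int^'d) \<Rightarrow> real). m (u, 0))"
  define g2 where "g2 = (\<lambda>m::((int^'d) \<times> (int^'d) \<Rightarrow> real). m (0, - u))"
  have [measurable]: "g1 \<in> borel_measurable mat_space" "g2 \<in> borel_measurable mat_space"
    unfolding g1_def g2_def by measurable
  have "(\<integral>\<omega>. A 1 \<omega> (a + u) a \<partial>M) = (\<integral>\<omega>. g1 (shm a (Y1 \<omega>)) \<partial>M)"
    by (simp add: g1_def shm_def mat_of_def add.commute)
  also have "\<dots> = (\<integral>\<omega>. g1 (Y1 \<omega>) \<partial>M)" by (rule int_shift(2)) simp
  also have "\<dots> = (\<integral>\<omega>. g2 (shm u (Y1 \<omega>)) \<partial>M)"
    by (simp add: g1_def g2_def shm_def mat_of_def)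
  also have "\<dots> = (\<integral>\<omega>. g2 (Y1 \<omega>) \<partial>M)" by (rule int_shift(2)) simp
  also have "\<dots> = mean_a M A (- u)" by (simp add: g2_def mat_of_def mean_a_def)
  finally show ?thesis .
qed

lemma mean_a_out: "v \<notin> Bl r \<Longrightarrow> mean_a M A v = 0"
  unfolding mean_a_def
  by (rule integral_eq_zero_AE, rule rng) (simp add: Bl_def norm1_uminus)

lemma aa_eq: "aa = (\<Sum>v\<in>Bl r. mean_a M A v)"
  unfolding aa_def abs_a_def by (rule infsum_finite_support) (use finite_Bl mean_a_out in auto)

lemma uminus_Bl: "uminus ` Bl r = Bl r"
proof -
  have "v \<in> uminus ` Bl r" if "v \<in> Bl r" for v
    using that Bl_uminus[of v] by (intro image_eqI[of _ _ "- v"]) auto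
  then show ?thesis using Bl_uminus by auto
qed

lemma E_colsum: "(\<integral>\<omega>. colsum a (Y1 \<omega>) \<partial>M) = aa"
proof -
  have "(\<integral>\<omega>. colsum a (Y1 \<omega>) \<partial>M) = (\<integral>\<omega>. (\<Sum>u\<in>Bl r. A 1 \<omega> (a + u) a) \<partial>M)"
    by (simp add: colsum_def mat_of_def)
  also have "\<dots> = (\<Sum>u\<in>Bl r. (\<integral>\<omega>. A 1 \<omega> (a + u) a \<partial>M))"
    by (rule Bochner_Integration.integral_sum[where f="\<lambda>u \<omega>. A 1 \<omega> (a + u) a"]) (rule L3_int[OF L3_entry])
  also have "\<dots> = (\<Sum>u\<in>Bl r. mean_a M A (- u))" by (rule sum.cong[OF refl mean_entry])
  also have "\<dots> = (\<Sum>v\<in>uminus ` Bl r. mean_a M A v)"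
    by (subst sum.reindex) (auto simp: comp_def)
  also have "\<dots> = aa" by (simp add: uminus_Bl aa_eq)
  finally show ?thesis .
qed

lemma AE_nonneg1: "AE \<omega> in M. \<forall>x y. A 1 \<omega> x y \<ge> 0"
  using nonneg by (simp add: AE_all_countable)

lemma AE_infsum_col: "AE \<omega> in M. infsum (\<lambda>x. A 1 \<omega> x 0) UNIV = colsum 0 (Y1 \<omega>)"
proof -
  have "AE \<omega> in M. \<forall>x. x \<notin> Bl r \<longrightarrow> A 1 \<omega> x 0 = 0"
  proof (subst AE_all_countable, intro allI)
    fix x show "AE \<omega> in M. x \<notin> Bl r \<longrightarrow> A 1 \<omega> x 0 = 0"
      by (cases "x \<in> Bl r") (use rng[of x 0] in \<open>auto simp: Bl_def\<close>)
  qed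
  then show ?thesis
  proof (rule AE_mp, intro AE_I2 impI)
    fix \<omega> assume z: "\<forall>x. x \<notin> Bl r \<longrightarrow> A 1 \<omega> x 0 = 0"
    have "infsum (\<lambda>x. A 1 \<omega> x 0) UNIV = (\<Sum>x\<in>Bl r. A 1 \<omega> x 0)"
      by (rule infsum_finite_support) (use finite_Bl z in auto)
    then show "infsum (\<lambda>x. A 1 \<omega> x 0) UNIV = colsum 0 (Y1 \<omega>)" by (simp add: colsum_def mat_of_def)
  qed
qed

lemma colsum_int: "integrable M (\<lambda>\<omega>. colsum a (Y1 \<omega>))"
  unfolding colsum_def mat_of_def prod.case by (rule Bochner_Integration.integrable_sum, rule L3_int, rule L3_entry)

lemma aa_pos: "aa > 0"
proof -
  have nn: "AE \<omega> in M. 0 \<le> colsum 0 (Y1 \<omega>)"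
    using AE_nonneg1 by eventually_elim (auto simp: colsum_def mat_of_def intro: sum_nonneg)
  have "aa \<ge> 0" using integral_nonneg_AE[OF nn] E_colsum by simp
  moreover have "aa \<noteq> 0"
  proof
    assume "aa = 0"
    then have "AE \<omega> in M. colsum 0 (Y1 \<omega>) = 0"
      using integral_nonneg_eq_0_iff_AE[OF colsum_int nn] E_colsum by simp
    then have "AE \<omega> in M. infsum (\<lambda>x. A 1 \<omega> x 0) UNIV = 0"
      using AE_infsum_col by eventually_elim simp
    then show False using nonconst by blast
  qed
  ultimately show ?thesis by simp
qed

lemma E_xf: "(\<integral>\<omega>. xf a (Y1 \<omega>) \<partial>M) = 0"
proof -
  have "(\<integral>\<omega>. xf a (Y1 \<omega>) \<partial>M) = (\<integral>\<omega>. colsum a (Y1 \<omega>) \<partial>M) / aa - 1"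
    unfolding xf_def using colsum_int by (simp add: prob_space)
  then show ?thesis using E_colsum aa_pos by simp
qed


definition "s2 = (\<integral>\<omega>. xf 0 (Y1 \<omega>) * xf 0 (Y1 \<omega>) \<partial>M)"
definition "m3 = (\<integral>\<omega>. xf 0 (Y1 \<omega>) * xf 0 (Y1 \<omega>) * xf 0 (Y1 \<omega>) \<partial>M)"

lemma E_diag2: "(\<integral>\<omega>. xf a (Y1 \<omega>) * xf a (Y1 \<omega>) \<partial>M) = s2"
proof -
  define g :: "((int^'d) \<times> (int^'d) \<Rightarrow> real) \<Rightarrow> real" where "g = (\<lambda>m. xf 0 m * xf 0 m)"
  have [measurable]: "g \<in> borel_measurable mat_space" unfolding g_def by measurable
  have "(\<integral>\<omega>. xf a (Y1 \<omega>) * xf a (Y1 \<omega>) \<partial>M) = (\<integral>\<omega>. g (shm a (Y1 \<omega>)) \<partial>M)"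
    by (simp add: g_def xf_shift)
  also have "\<dots> = (\<integral>\<omega>. g (Y1 \<omega>) \<partial>M)" by (rule int_shift(2)) simp
  finally show ?thesis by (simp add: g_def s2_def)
qed

lemma E_diag3: "(\<integral>\<omega>. xf a (Y1 \<omega>) * xf a (Y1 \<omega>) * xf a (Y1 \<omega>) \<partial>M) = m3"
proof -
  define g :: "((int^'d) \<times> (int^'d) \<Rightarrow> real) \<Rightarrow> real" where "g = (\<lambda>m. xf 0 m * xf 0 m * xf 0 m)"
  have [measurable]: "g \<in> borel_measurable mat_space" unfolding g_def by measurable
  have "(\<integral>\<omega>. xf a (Y1 \<omega>) * xf a (Y1 \<omega>) * xf a (Y1 \<omega>) \<partial>M) = (\<integral>\<omega>. g (shm a (Y1 \<omega>)) \<partial>M)"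
    by (simp add: g_def xf_shift)
  also have "\<dots> = (\<integral>\<omega>. g (Y1 \<omega>) \<partial>M)" by (rule int_shift(2)) simp
  finally show ?thesis by (simp add: g_def m3_def)
qed

lemma s2_pos: "s2 > 0"
proof -
  have nn: "AE \<omega> in M. 0 \<le> xf 0 (Y1 \<omega>) * xf 0 (Y1 \<omega>)" by simp
  have int: "integrable M (\<lambda>\<omega>. xf 0 (Y1 \<omega>) * xf 0 (Y1 \<omega>))" by (rule L3_prod2[OF L3_xf L3_xf])
  have "s2 \<ge> 0" unfolding s2_def using integral_nonneg_AE[OF nn] .
  moreover have "s2 \<noteq> 0"
  proof
    assume "s2 = 0"
    then have "AE \<omega> in M. xf 0 (Y1 \<omega>) * xf 0 (Y1 \<omega>) = 0"
      using integral_nonneg_eq_0_iff_AE[OF int nn] unfolding s2_def by simp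
    then have "AE \<omega> in M. infsum (\<lambda>x. A 1 \<omega> x 0) UNIV = aa"
      using AE_infsum_col
    proof eventually_elim
      case (elim \<omega>)
      then have "colsum 0 (Y1 \<omega>) / aa = 1" by (simp add: xf_def)
      then show ?case using elim aa_pos by (simp add: field_simps)
    qed
    then show False using nonconst by blast
  qed
  ultimately show ?thesis by simp
qed

lemma indep_xf:
  assumes aJ: "a \<notin> J" and psi[measurable]: "psi \<in> borel_measurable (PiM J (\<lambda>_. col_space))"
  shows "indep_var borel (\<lambda>\<omega>. xf a (Y1 \<omega>)) borel (\<lambda>\<omega>. psi (restrict (\<lambda>y. \<lambda>x. A 1 \<omega> x y) J))"
proof -
  have i: "indep_var (PiM {a} (\<lambda>_. col_space)) (\<lambda>\<omega>. restrict (\<lambda>y. \<lambda>x. A 1 \<omega> x y) {a})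
                     (PiM J (\<lambda>_. col_space)) (\<lambda>\<omega>. restrict (\<lambda>y. \<lambda>x. A 1 \<omega> x y) J)"
    by (rule indep_var_restrict[OF cols]) (use aJ in auto)
  have phi: "(\<lambda>f. colf a (f a)) \<in> borel_measurable (PiM {a} (\<lambda>_. col_space))"
  proof -
    have "(\<lambda>f. f a) \<in> measurable (PiM {a} (\<lambda>_. col_space)) col_space"
      by (rule measurable_component_singleton) simp
    then show ?thesis by (rule measurable_compose) simp
  qed
  have "indep_var borel ((\<lambda>f. colf a (f a)) \<circ> (\<lambda>\<omega>. restrict (\<lambda>y. \<lambda>x. A 1 \<omega> x y) {a}))
       borel (psi \<circ> (\<lambda>\<omega>. restrict (\<lambda>y. \<lambda>x. A 1 \<omega> x y) J))"
    by (rule indep_var_compose[OF i phi psi])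
  moreover have "(\<lambda>f. colf a (f a)) \<circ> (\<lambda>\<omega>. restrict (\<lambda>y. \<lambda>x. A 1 \<omega> x y) {a}) = (\<lambda>\<omega>. xf a (Y1 \<omega>))"
    by (auto simp: xf_colf mat_of_def fun_eq_iff)
  ultimately show ?thesis by (simp add: comp_def)
qed

lemma E_off2:
  assumes "a \<noteq> b"
  shows "(\<integral>\<omega>. xf a (Y1 \<omega>) * xf b (Y1 \<omega>) \<partial>M) = 0"
proof -
  define psi where "psi = (\<lambda>f::int^'d \<Rightarrow> int^'d \<Rightarrow> real. colf b (f b))"
  have [measurable]: "psi \<in> borel_measurable (PiM {b} (\<lambda>_. col_space))"
  proof -
    have "(\<lambda>f. f b) \<in> measurable (PiM {b} (\<lambda>_. col_space)) col_space"
      by (rule measurable_component_singleton) simp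
    then show ?thesis unfolding psi_def by (rule measurable_compose) simp
  qed
  have e: "psi (restrict (\<lambda>y. \<lambda>x. A 1 \<omega> x y) {b}) = xf b (Y1 \<omega>)" for \<omega>
    by (simp add: psi_def xf_colf mat_of_def)
  have "indep_var borel (\<lambda>\<omega>. xf a (Y1 \<omega>)) borel (\<lambda>\<omega>. xf b (Y1 \<omega>))"
    using indep_xf[of a "{b}" psi] assms e by simp
  then have "(\<integral>\<omega>. xf a (Y1 \<omega>) * xf b (Y1 \<omega>) \<partial>M) = (\<integral>\<omega>. xf a (Y1 \<omega>) \<partial>M) * (\<integral>\<omega>. xf b (Y1 \<omega>) \<partial>M)"
    by (rule indep_var_lebesgue_integral) (rule L3_int[OF L3_xf])+
  then show ?thesis using E_xf[of a] by simp
qed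

lemma E_off3:
  assumes "a \<notin> {b, c}"
  shows "(\<integral>\<omega>. xf a (Y1 \<omega>) * (xf b (Y1 \<omega>) * xf c (Y1 \<omega>)) \<partial>M) = 0"
proof -
  define psi where "psi = (\<lambda>f::int^'d \<Rightarrow> int^'d \<Rightarrow> real. colf b (f b) * colf c (f c))"
  have [measurable]: "psi \<in> borel_measurable (PiM {b, c} (\<lambda>_. col_space))"
  proof -
    have mb: "(\<lambda>f. f b) \<in> measurable (PiM {b, c} (\<lambda>_. col_space)) col_space"
      by (rule measurable_component_singleton) simp
    have mc: "(\<lambda>f. f c) \<in> measurable (PiM {b, c} (\<lambda>_. col_space)) col_space"
      by (rule measurable_component_singleton) simp
    have "(\<lambda>f. colf b (f b)) \<in> borel_measurable (PiM {b, c} (\<lambda>_. col_space))"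
      by (rule measurable_compose[OF mb colf_meas])
    moreover have "(\<lambda>f. colf c (f c)) \<in> borel_measurable (PiM {b, c} (\<lambda>_. col_space))"
      by (rule measurable_compose[OF mc colf_meas])
    ultimately show ?thesis unfolding psi_def by (rule borel_measurable_times)
  qed
  have e: "psi (restrict (\<lambda>y. \<lambda>x. A 1 \<omega> x y) {b, c}) = xf b (Y1 \<omega>) * xf c (Y1 \<omega>)" for \<omega>
    by (simp add: psi_def xf_colf mat_of_def)
  have "indep_var borel (\<lambda>\<omega>. xf a (Y1 \<omega>)) borel (\<lambda>\<omega>. xf b (Y1 \<omega>) * xf c (Y1 \<omega>))"
    using indep_xf[of a "{b, c}" psi] assms e by simp
  then have "(\<integral>\<omega>. xf a (Y1 \<omega>) * (xf b (Y1 \<omega>) * xf c (Y1 \<omega>)) \<partial>M)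
      = (\<integral>\<omega>. xf a (Y1 \<omega>) \<partial>M) * (\<integral>\<omega>. xf b (Y1 \<omega>) * xf c (Y1 \<omega>) \<partial>M)"
    by (rule indep_var_lebesgue_integral) (rule L3_int[OF L3_xf], rule L3_prod2[OF L3_xf L3_xf])
  then show ?thesis using E_xf[of a] by simp
qed

lemma E2: "(\<integral>\<omega>. xf a (Y1 \<omega>) * xf b (Y1 \<omega>) \<partial>M) = (if a = b then s2 else 0)"
  using E_diag2 E_off2 by auto

lemma E3: "(\<integral>\<omega>. xf a (Y1 \<omega>) * xf b (Y1 \<omega>) * xf c (Y1 \<omega>) \<partial>M) = (if a = b \<and> b = c then m3 else 0)"
proof (cases "a = b \<and> b = c")
  case True then show ?thesis using E_diag3 by simp
next
  case F: False
  have "(\<integral>\<omega>. xf a (Y1 \<omega>) * xf b (Y1 \<omega>) * xf c (Y1 \<omega>) \<partial>M) = 0"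
  proof (cases "a \<in> {b, c}")
    case False
    then show ?thesis using E_off3[OF False] by (simp add: mult.assoc)
  next
    case a: True
    show ?thesis
    proof (cases "b \<in> {a, c}")
      case False
      have "(\<integral>\<omega>. xf a (Y1 \<omega>) * xf b (Y1 \<omega>) * xf c (Y1 \<omega>) \<partial>M)
          = (\<integral>\<omega>. xf b (Y1 \<omega>) * (xf a (Y1 \<omega>) * xf c (Y1 \<omega>)) \<partial>M)"
        by (simp add: ac_simps)
      then show ?thesis using E_off3[OF False] by simp
    next
      case b: True
      then have c: "c \<notin> {a, b}" using a F by auto
      have "(\<integral>\<omega>. xf a (Y1 \<omega>) * xf b (Y1 \<omega>) * xf c (Y1 \<omega>) \<partial>M)
          = (\<integral>\<omega>. xf c (Y1 \<omega>) * (xf a (Y1 \<omega>) * xf b (Y1 \<omega>)) \<partial>M)"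
        by (simp add: ac_simps)
      then show ?thesis using E_off3[OF c] by simp
    qed
  qed
  then show ?thesis using F by auto
qed


lemma good_V:
  assumes g: "good \<omega>" and t: "t \<ge> 1"
  shows "V_t M A M0 t \<omega> = (1 / aa) * (\<Sum>y\<in>Ks (t - 1). Rc (t - 1) \<omega> y * colsum y (mat_of (A t) \<omega>))"
proof -
  let ?K = "Ks (t - 1)"
  define f where "f = (\<lambda>(x, y). rho_star A M0 (t - 1) \<omega> y * A t \<omega> x y)"
  define P where "P = (\<lambda>(y, u). (y + u, y)) ` (?K \<times> Bl r)"
  have finP: "finite P" unfolding P_def using finite_Ks finite_Bl by auto
  have out: "f p = 0" if "p \<notin> P" for p
  proof (cases p)
    case (Pair x y)
    show ?thesis
    proof (cases "y \<in> ?K")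
      case False
      then show ?thesis using Pair good_rho[OF g] good_Rc_out[OF g False] by (simp add: f_def)
    next
      case True
      have "x - y \<notin> Bl r"
      proof
        assume "x - y \<in> Bl r"
        then have "p \<in> P" unfolding P_def Pair using True by (intro image_eqI[of _ _ "(y, x - y)"]) auto
        then show False using that by simp
      qed
      then have "norm1 (x - y) > int r" by (simp add: Bl_def)
      then have "A t \<omega> x y = 0" using g t unfolding good_def by auto
      then show ?thesis by (simp add: f_def Pair)
    qed
  qed
  have "infsum f UNIV = sum f P" by (rule infsum_finite_support[OF finP out])
  also have "\<dots> = (\<Sum>q\<in>?K \<times> Bl r. f ((\<lambda>(y, u). (y + u, y)) q))"
    unfolding P_def by (subst sum.reindex) (auto simp: inj_on_def)
  also have "\<dots> = (\<Sum>y\<in>?K. \<Sum>u\<in>Bl r. Rc (t - 1) \<omega> y * A t \<omega> (y + u) y)"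
    unfolding sum.cartesian_product by (rule sum.cong) (auto simp: f_def good_rho[OF g])
  also have "\<dots> = (\<Sum>y\<in>?K. Rc (t - 1) \<omega> y * colsum y (mat_of (A t) \<omega>))"
    by (simp add: colsum_def mat_of_def sum_distrib_left)
  finally show ?thesis unfolding V_t_def aa_def f_def by simp
qed

lemma good_colsum_nonneg: "good \<omega> \<Longrightarrow> t \<ge> 1 \<Longrightarrow> colsum y (mat_of (A t) \<omega>) \<ge> 0"
  unfolding colsum_def mat_of_def good_def by (auto intro!: sum_nonneg)

definition "Wf t \<omega> = (\<Sum>y\<in>Ks (t - 1). Rc (t - 1) \<omega> y * xf y (mat_of (A t) \<omega>))"

lemma good_V_W:
  assumes g: "good \<omega>" and t: "t \<ge> 1"
  shows "V_t M A M0 t \<omega> \<ge> 0"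
    and "Tm (t - 1) \<omega> > 0 \<Longrightarrow> V_t M A M0 t \<omega> = 1 + Wf t \<omega>"
    and "\<not> Tm (t - 1) \<omega> > 0 \<Longrightarrow> V_t M A M0 t \<omega> = 0 \<and> Wf t \<omega> = 0"
proof -
  show "V_t M A M0 t \<omega> \<ge> 0" unfolding good_V[OF g t] using aa_pos
    by (intro mult_nonneg_nonneg sum_nonneg) (auto intro: Rc_bounds good_colsum_nonneg[OF g t])
  have W: "Wf t \<omega> = (1 / aa) * (\<Sum>y\<in>Ks (t - 1). Rc (t - 1) \<omega> y * colsum y (mat_of (A t) \<omega>))
                    - (\<Sum>y\<in>Ks (t - 1). Rc (t - 1) \<omega> y)"
    unfolding Wf_def xf_def
    by (simp add: algebra_simps sum_subtractf sum_distrib_left sum_divide_distrib)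
  show "Tm (t - 1) \<omega> > 0 \<Longrightarrow> V_t M A M0 t \<omega> = 1 + Wf t \<omega>"
    using W good_Rc_sum[OF g] good_V[OF g t] by simp
  show "\<not> Tm (t - 1) \<omega> > 0 \<Longrightarrow> V_t M A M0 t \<omega> = 0 \<and> Wf t \<omega> = 0"
    using good_V[OF g t] Rc_zero by (simp add: Wf_def)
qed


lemma condexp_lin:
  fixes g :: "'i \<Rightarrow> ((int^'d) \<times> (int^'d) \<Rightarrow> real) \<Rightarrow> real" and Phi :: "'i \<Rightarrow> 'w \<Rightarrow> real"
  assumes t: "t \<ge> 1" and I: "finite I"
    and Phi: "\<And>i. Phi i \<in> borel_measurable (filt M A (t - 1))" and B: "\<And>i \<omega>. \<bar>Phi i \<omega>\<bar> \<le> 1"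
    and g: "\<And>i. g i \<in> borel_measurable mat_space" and gi: "\<And>i. integrable M (\<lambda>\<omega>. g i (mat_of (A t) \<omega>))"
  shows "integrable M (\<lambda>\<omega>. \<Sum>i\<in>I. Phi i \<omega> * g i (mat_of (A t) \<omega>))"
    and "AE \<omega> in M. real_cond_exp M (filt M A (t - 1)) (\<lambda>\<omega>. \<Sum>i\<in>I. Phi i \<omega> * g i (mat_of (A t) \<omega>)) \<omega>
            = (\<Sum>i\<in>I. Phi i \<omega> * (\<integral>\<omega>. g i (mat_of (A t) \<omega>) \<partial>M))"
proof -
  interpret S: finite_measure_subalgebra M "filt M A (t - 1)"
    by unfold_locales (rule subalg_filt)
  have int: "integrable M (\<lambda>\<omega>. Phi i \<omega> * g i (mat_of (A t) \<omega>))" for i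
    by (rule indep_prod(1)[OF t Phi B g gi])
  show "integrable M (\<lambda>\<omega>. \<Sum>i\<in>I. Phi i \<omega> * g i (mat_of (A t) \<omega>))"
    by (rule Bochner_Integration.integrable_sum) (rule int)
  have s: "AE \<omega> in M. real_cond_exp M (filt M A (t - 1)) (\<lambda>\<omega>. \<Sum>i\<in>I. Phi i \<omega> * g i (mat_of (A t) \<omega>)) \<omega>
     = (\<Sum>i\<in>I. real_cond_exp M (filt M A (t - 1)) (\<lambda>\<omega>. Phi i \<omega> * g i (mat_of (A t) \<omega>)) \<omega>)"
    by (rule S.real_cond_exp_sum) (rule int)
  have e: "AE \<omega> in M. \<forall>i\<in>I. real_cond_exp M (filt M A (t - 1)) (\<lambda>\<omega>. Phi i \<omega> * g i (mat_of (A t) \<omega>)) \<omega>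
     = Phi i \<omega> * (\<integral>\<omega>. g i (mat_of (A t) \<omega>) \<partial>M)"
    by (rule AE_finite_allI[OF I]) (rule condexp_indep[OF t Phi B g gi])
  show "AE \<omega> in M. real_cond_exp M (filt M A (t - 1)) (\<lambda>\<omega>. \<Sum>i\<in>I. Phi i \<omega> * g i (mat_of (A t) \<omega>)) \<omega>
            = (\<Sum>i\<in>I. Phi i \<omega> * (\<integral>\<omega>. g i (mat_of (A t) \<omega>) \<partial>M))"
    using s e by eventually_elim simp
qed


lemma sum_diag2:
  fixes f :: "'a \<Rightarrow> real"
  assumes "finite K"
  shows "(\<Sum>p\<in>K \<times> K. f (fst p) * f (snd p) * (if fst p = snd p then c else 0)) = c * (\<Sum>a\<in>K. f a * f a)"
proof -
  have "(\<Sum>p\<in>K \<times> K. f (fst p) * f (snd p) * (if fst p = snd p then c else 0))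
      = (\<Sum>a\<in>K. \<Sum>b\<in>K. f a * f b * (if a = b then c else 0))"
    by (simp add: sum.cartesian_product split_beta)
  also have "\<dots> = (\<Sum>a\<in>K. f a * f a * c)"
  proof (rule sum.cong[OF refl])
    fix a assume a: "a \<in> K"
    have "(\<Sum>b\<in>K. f a * f b * (if a = b then c else 0)) = (\<Sum>b\<in>K. if a = b then f a * f a * c else 0)"
      by (rule sum.cong) auto
    also have "\<dots> = f a * f a * c" using a assms by simp
    finally show "(\<Sum>b\<in>K. f a * f b * (if a = b then c else 0)) = f a * f a * c" .
  qed
  finally show ?thesis by (simp add: sum_distrib_left ac_simps)
qed

lemma sum_diag3:
  fixes f :: "'a \<Rightarrow> real"
  assumes "finite K"
  shows "(\<Sum>p\<in>K \<times> K \<times> K. f (fst p) * f (fst (snd p)) * f (snd (snd p)) *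
            (if fst p = fst (snd p) \<and> fst (snd p) = snd (snd p) then c else 0)) = c * (\<Sum>a\<in>K. f a * f a * f a)"
proof -
  have "(\<Sum>p\<in>K \<times> K \<times> K. f (fst p) * f (fst (snd p)) * f (snd (snd p)) *
            (if fst p = fst (snd p) \<and> fst (snd p) = snd (snd p) then c else 0))
      = (\<Sum>a\<in>K. \<Sum>q\<in>K \<times> K. f a * f (fst q) * f (snd q) * (if a = fst q \<and> fst q = snd q then c else 0))"
    by (simp add: sum.cartesian_product split_beta)
  also have "\<dots> = (\<Sum>a\<in>K. f a * f a * f a * c)"
  proof (rule sum.cong[OF refl])
    fix a assume a: "a \<in> K"
    have "(\<Sum>q\<in>K \<times> K. f a * f (fst q) * f (snd q) * (if a = fst q \<and> fst q = snd q then c else 0))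
        = (\<Sum>q\<in>K \<times> K. if q = (a, a) then f a * f a * f a * c else 0)"
      by (rule sum.cong) auto
    also have "\<dots> = f a * f a * f a * c" using a assms by simp
    finally show "(\<Sum>q\<in>K \<times> K. f a * f (fst q) * f (snd q) * (if a = fst q \<and> fst q = snd q then c else 0)) = f a * f a * f a * c" .
  qed
  finally show ?thesis by (simp add: sum_distrib_left ac_simps)
qed

lemma powr_bound:
  fixes v h :: real
  assumes "v \<ge> 0" "0 < h" "h < 1"
  shows "\<bar>1 - v powr h\<bar> \<le> 2 + v"
proof -
  have "v powr h \<le> 1 + v"
  proof (cases "v \<le> 1")
    case True
    then have "v powr h \<le> 1" using assms by (intro powr_le1) auto
    then show ?thesis using assms by simp
  next
    case False
    then have "v powr h \<le> v powr 1" using assms by (intro powr_mono) auto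
    then show ?thesis using False by simp
  qed
  moreover have "v powr h \<ge> 0" by simp
  ultimately show ?thesis by linarith
qed


definition "Lc = 3 + \<bar>m3\<bar> / s2"
definition "kc h = h * (1 - h) / 2 * (1 + Lc) powr (h - 2)"
definition "cst h = kc h * s2 / Lc"

lemma Lc_ge: "Lc \<ge> 3" unfolding Lc_def using s2_pos by simp

lemma cst_pos: "0 < h \<Longrightarrow> h < 1 \<Longrightarrow> cst h > 0"
  unfolding cst_def kc_def using s2_pos Lc_ge by (intro divide_pos_pos mult_pos_pos) auto

lemma coef_ineq:
  assumes h: "0 < h" "h < 1" and a: "0 \<le> a3" "a3 \<le> a2"
  shows "kc h * (1 - 2 / Lc) * (s2 * a2) - kc h / Lc * (m3 * a3) \<ge> cst h * a2"
proof -
  have k0: "kc h \<ge> 0" unfolding kc_def using h by (intro mult_nonneg_nonneg) auto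
  have L: "Lc > 0" using Lc_ge by simp
  have LL: "(Lc - 2) * s2 = s2 + \<bar>m3\<bar>" unfolding Lc_def using s2_pos by (simp add: field_simps)
  have "m3 * a3 \<le> \<bar>m3\<bar> * a2"
  proof -
    have "m3 * a3 \<le> \<bar>m3\<bar> * a3" using a by (intro mult_right_mono) auto
    also have "\<dots> \<le> \<bar>m3\<bar> * a2" using a by (intro mult_left_mono) auto
    finally show ?thesis .
  qed
  then have "kc h / Lc * (m3 * a3) \<le> kc h / Lc * (\<bar>m3\<bar> * a2)"
    using k0 L by (intro mult_left_mono) auto
  moreover have "kc h * (1 - 2 / Lc) * (s2 * a2) - kc h / Lc * (\<bar>m3\<bar> * a2) = cst h * a2"
  proof -
    have "kc h * (1 - 2 / Lc) * (s2 * a2) - kc h / Lc * (\<bar>m3\<bar> * a2) = kc h / Lc * a2 * ((Lc - 2) * s2 - \<bar>m3\<bar>)"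
      using L by (simp add: field_simps)
    also have "\<dots> = cst h * a2" unfolding LL cst_def by (simp add: field_simps)
    finally show ?thesis .
  qed
  ultimately show ?thesis by linarith
qed


lemma main_t:
  assumes h: "0 < h" "h < 1" and t: "t \<ge> 1"
  shows "AE \<omega> in M. real_cond_exp M (filt M A (t - 1)) (\<lambda>\<omega>'. 1 - V_t M A M0 t \<omega>' powr h) \<omega>
           \<ge> cst h * infsum (\<lambda>x. (rho_star A M0 (t - 1) \<omega> x)\<^sup>2) UNIV"
proof -
  interpret S: finite_measure_subalgebra M "filt M A (t - 1)"
    by unfold_locales (rule subalg_filt)
  define K where "K = Ks (t - 1)"
  define R where "R = (\<lambda>y \<omega>. Rc (t - 1) \<omega> y)"
  have finK: "finite K" unfolding K_def by (rule finite_Ks)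
  have Rm[measurable]: "R y \<in> borel_measurable (filt M A (t - 1))" for y unfolding R_def by simp
  have Rb: "\<bar>R y \<omega>\<bar> \<le> 1" for y \<omega> unfolding R_def using Rc_bounds[of "t - 1" \<omega> y] by simp
  have R01: "0 \<le> R y \<omega>" "R y \<omega> \<le> 1" for y \<omega> unfolding R_def using Rc_bounds by auto
  have Rb2: "\<bar>R a \<omega> * R b \<omega>\<bar> \<le> 1" for a b \<omega>
    by (metis R01 abs_of_nonneg mult_le_one mult_nonneg_nonneg)
  have Rb3: "\<bar>R a \<omega> * R b \<omega> * R c \<omega>\<bar> \<le> 1" for a b c \<omega>
    by (metis R01 abs_of_nonneg mult_le_one mult_nonneg_nonneg)
  define g1 :: "int^'d \<Rightarrow> ((int^'d) \<times> (int^'d) \<Rightarrow> real) \<Rightarrow> real" where "g1 = (\<lambda>a m. xf a m)"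
  define g2 :: "(int^'d) \<times> (int^'d) \<Rightarrow> ((int^'d) \<times> (int^'d) \<Rightarrow> real) \<Rightarrow> real" where "g2 = (\<lambda>(p::(int^'d) \<times> (int^'d)) m. xf (fst p) m * xf (snd p) m)"
  define g3 :: "(int^'d) \<times> (int^'d) \<times> (int^'d) \<Rightarrow> ((int^'d) \<times> (int^'d) \<Rightarrow> real) \<Rightarrow> real" where "g3 = (\<lambda>(p::(int^'d) \<times> (int^'d) \<times> (int^'d)) m. xf (fst p) m * xf (fst (snd p)) m * xf (snd (snd p)) m)"
  have g1m[measurable]: "g1 a \<in> borel_measurable mat_space" for a unfolding g1_def by measurable
  have g2m[measurable]: "g2 p \<in> borel_measurable mat_space" for p unfolding g2_def by measurable
  have g3m[measurable]: "g3 p \<in> borel_measurable mat_space" for p unfolding g3_def by measurable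
  have gi1: "integrable M (\<lambda>\<omega>. g1 a (mat_of (A t) \<omega>))" for a
    using int_transfer(1)[OF t g1m[of a]] L3_int[OF L3_xf[of a]] by (simp add: g1_def)
  have gi2: "integrable M (\<lambda>\<omega>. g2 p (mat_of (A t) \<omega>))" for p
    using int_transfer(1)[OF t g2m[of p]] L3_prod2[OF L3_xf L3_xf] by (simp add: g2_def)
  have gi3: "integrable M (\<lambda>\<omega>. g3 p (mat_of (A t) \<omega>))" for p
    using int_transfer(1)[OF t g3m[of p]] L3_prod3[OF L3_xf L3_xf L3_xf] by (simp add: g3_def)
  have Eg1: "(\<integral>\<omega>. g1 a (mat_of (A t) \<omega>) \<partial>M) = 0" for a
    using int_transfer(2)[OF t g1m[of a]] E_xf[of a] by (simp add: g1_def)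
  have Eg2: "(\<integral>\<omega>. g2 p (mat_of (A t) \<omega>) \<partial>M) = (if fst p = snd p then s2 else 0)" for p
    using int_transfer(2)[OF t g2m[of p]] E2[of "fst p" "snd p"] by (simp add: g2_def)
  have Eg3: "(\<integral>\<omega>. g3 p (mat_of (A t) \<omega>) \<partial>M) = (if fst p = fst (snd p) \<and> fst (snd p) = snd (snd p) then m3 else 0)" for p
    using int_transfer(2)[OF t g3m[of p]] E3[of "fst p" "fst (snd p)" "snd (snd p)"] by (simp add: g3_def)
  define S1 where "S1 = (\<lambda>\<omega>. \<Sum>i\<in>K. R i \<omega> * g1 i (mat_of (A t) \<omega>))"
  define S2 where "S2 = (\<lambda>\<omega>. \<Sum>i\<in>K \<times> K. (\<lambda>p \<omega>. R (fst p) \<omega> * R (snd p) \<omega>) i \<omega> * g2 i (mat_of (A t) \<omega>))"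
  define S3 where "S3 = (\<lambda>\<omega>. \<Sum>i\<in>K \<times> K \<times> K. (\<lambda>p \<omega>. R (fst p) \<omega> * R (fst (snd p)) \<omega> * R (snd (snd p)) \<omega>) i \<omega> * g3 i (mat_of (A t) \<omega>))"
  have c1: "integrable M S1"
    "AE \<omega> in M. real_cond_exp M (filt M A (t - 1)) S1 \<omega> = (\<Sum>i\<in>K. R i \<omega> * (\<integral>\<omega>. g1 i (mat_of (A t) \<omega>) \<partial>M))"
    unfolding S1_def by (rule condexp_lin[OF t finK Rm Rb g1m gi1])+
  have P2m: "(\<lambda>p \<omega>. R (fst p) \<omega> * R (snd p) \<omega>) i \<in> borel_measurable (filt M A (t - 1))" for i
    by (rule borel_measurable_times[OF Rm Rm])
  have P3m: "(\<lambda>p \<omega>. R (fst p) \<omega> * R (fst (snd p)) \<omega> * R (snd (snd p)) \<omega>) i \<in> borel_measurable (filt M A (t - 1))" for i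
    by (rule borel_measurable_times[OF borel_measurable_times[OF Rm Rm] Rm])
  have c2: "integrable M S2"
    "AE \<omega> in M. real_cond_exp M (filt M A (t - 1)) S2 \<omega> = (\<Sum>i\<in>K \<times> K. (\<lambda>p \<omega>. R (fst p) \<omega> * R (snd p) \<omega>) i \<omega> * (\<integral>\<omega>. g2 i (mat_of (A t) \<omega>) \<partial>M))"
  proof -
    have B2: "\<bar>(\<lambda>p \<omega>. R (fst p) \<omega> * R (snd p) \<omega>) i \<omega>\<bar> \<le> 1" for i \<omega> using Rb2 by simp
    note cl = condexp_lin[OF t finite_cartesian_product[OF finK finK] P2m B2 g2m gi2]
    show "integrable M S2" unfolding S2_def by (rule cl(1))
    show "AE \<omega> in M. real_cond_exp M (filt M A (t - 1)) S2 \<omega> = (\<Sum>i\<in>K \<times> K. (\<lambda>p \<omega>. R (fst p) \<omega> * R (snd p) \<omega>) i \<omega> * (\<integral>\<omega>. g2 i (mat_of (A t) \<omega>) \<partial>M))"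
      unfolding S2_def by (rule cl(2))
  qed
  have c3: "integrable M S3"
    "AE \<omega> in M. real_cond_exp M (filt M A (t - 1)) S3 \<omega> = (\<Sum>i\<in>K \<times> K \<times> K. (\<lambda>p \<omega>. R (fst p) \<omega> * R (fst (snd p)) \<omega> * R (snd (snd p)) \<omega>) i \<omega> * (\<integral>\<omega>. g3 i (mat_of (A t) \<omega>) \<partial>M))"
  proof -
    have B3: "\<bar>(\<lambda>p \<omega>. R (fst p) \<omega> * R (fst (snd p)) \<omega> * R (snd (snd p)) \<omega>) i \<omega>\<bar> \<le> 1" for i \<omega> using Rb3 by simp
    note cl = condexp_lin[OF t finite_cartesian_product[OF finK finite_cartesian_product[OF finK finK]] P3m B3 g3m gi3]
    show "integrable M S3" unfolding S3_def by (rule cl(1))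
    show "AE \<omega> in M. real_cond_exp M (filt M A (t - 1)) S3 \<omega> = (\<Sum>i\<in>K \<times> K \<times> K. (\<lambda>p \<omega>. R (fst p) \<omega> * R (fst (snd p)) \<omega> * R (snd (snd p)) \<omega>) i \<omega> * (\<integral>\<omega>. g3 i (mat_of (A t) \<omega>) \<partial>M))"
      unfolding S3_def by (rule cl(2))
  qed
  have e1: "AE \<omega> in M. real_cond_exp M (filt M A (t - 1)) S1 \<omega> = 0"
    using c1(2) by eventually_elim (simp add: Eg1)
  have e2: "AE \<omega> in M. real_cond_exp M (filt M A (t - 1)) S2 \<omega> = s2 * (\<Sum>a\<in>K. R a \<omega> * R a \<omega>)"
    using c2(2)
  proof eventually_elim
    case (elim \<omega>)
    then show ?case using sum_diag2[OF finK, of "\<lambda>a. R a \<omega>" s2] by (simp add: Eg2 mult.assoc)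
  qed
  have e3: "AE \<omega> in M. real_cond_exp M (filt M A (t - 1)) S3 \<omega> = m3 * (\<Sum>a\<in>K. R a \<omega> * R a \<omega> * R a \<omega>)"
    using c3(2)
  proof eventually_elim
    case (elim \<omega>)
    then show ?case using sum_diag3[OF finK, of "\<lambda>a. R a \<omega>" m3] by (simp add: Eg3 mult.assoc)
  qed
  have S1W: "S1 \<omega> = Wf t \<omega>" for \<omega> unfolding S1_def Wf_def g1_def R_def K_def by simp
  have S2sq: "S2 \<omega> = S1 \<omega> * S1 \<omega>" for \<omega>
    unfolding S2_def S1_def g1_def g2_def sum_product sum.cartesian_product
    by (rule sum.cong) (auto simp: split_beta ac_simps)
  have S3cu: "S3 \<omega> = S1 \<omega> * S2 \<omega>" for \<omega>
    unfolding S3_def S2_def S1_def g1_def g2_def g3_def sum_product sum.cartesian_product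
    by (rule sum.cong) (auto simp: split_beta ac_simps)
  define al where "al = kc h * (1 - 2 / Lc)"
  define be where "be = kc h / Lc"
  define Q where "Q = (\<lambda>\<omega>. (- h * S1 \<omega> + al * S2 \<omega>) - be * S3 \<omega>)"
  define LHS where "LHS = (\<lambda>\<omega>'. 1 - V_t M A M0 t \<omega>' powr h)"
  have pw: "Q \<omega> \<le> LHS \<omega>" if g: "good \<omega>" for \<omega>
  proof (cases "Tm (t - 1) \<omega> > 0")
    case True
    define W where "W = Wf t \<omega>"
    have V: "V_t M A M0 t \<omega> = 1 + W" using good_V_W(2)[OF g t True] unfolding W_def .
    have W1: "W \<ge> -1" using good_V_W(1)[OF g t] V by simp
    have "1 - (1 + W) powr h \<ge> - h * W + kc h * (1 - 2 / Lc) * W\<^sup>2 - (kc h / Lc) * W ^ 3"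
      unfolding kc_def by (rule key_ineq) (use h Lc_ge W1 in auto)
    moreover have "Q \<omega> = - h * W + kc h * (1 - 2 / Lc) * W\<^sup>2 - (kc h / Lc) * W ^ 3"
      unfolding Q_def al_def be_def S3cu S2sq S1W W_def by (simp add: power2_eq_square power3_eq_cube)
    ultimately show ?thesis unfolding LHS_def V by simp
  next
    case False
    then have "V_t M A M0 t \<omega> = 0" "Wf t \<omega> = 0" using good_V_W(3)[OF g t] by auto
    then show ?thesis unfolding LHS_def Q_def S3cu S2sq S1W using h by simp
  qed
  have intQ: "integrable M Q" unfolding Q_def using c1(1) c2(1) c3(1) by auto
  have intLHS: "integrable M LHS"
  proof -
    have gc[measurable]: "colsum y \<in> borel_measurable mat_space" for y by simp
    have gci: "integrable M (\<lambda>\<omega>. colsum y (mat_of (A t) \<omega>))" for y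
      using int_transfer(1)[OF t gc[of y]] colsum_int[of y] by simp
    have i0: "integrable M (\<lambda>\<omega>. \<Sum>y\<in>K. R y \<omega> * colsum y (mat_of (A t) \<omega>))"
      by (rule condexp_lin(1)[OF t finK Rm Rb gc gci])
    have i1: "integrable M (\<lambda>\<omega>. 2 + (1 / aa) * (\<Sum>y\<in>K. R y \<omega> * colsum y (mat_of (A t) \<omega>)))"
      using i0 by simp
    show ?thesis
    proof (rule Bochner_Integration.integrable_bound[OF i1])
      show "LHS \<in> borel_measurable M" unfolding LHS_def using V_meas[OF t] by measurable
      show "AE \<omega> in M. norm (LHS \<omega>) \<le> norm (2 + (1 / aa) * (\<Sum>y\<in>K. R y \<omega> * colsum y (mat_of (A t) \<omega>)))"
        using AE_good
      proof eventually_elim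
        case (elim \<omega>)
        have V: "V_t M A M0 t \<omega> = (1 / aa) * (\<Sum>y\<in>K. R y \<omega> * colsum y (mat_of (A t) \<omega>))"
          using good_V[OF elim t] unfolding K_def R_def .
        have V0: "V_t M A M0 t \<omega> \<ge> 0" by (rule good_V_W(1)[OF elim t])
        have "norm (LHS \<omega>) \<le> 2 + V_t M A M0 t \<omega>" unfolding LHS_def using powr_bound[OF V0 h] by simp
        then show ?case unfolding V using V0 V by simp
      qed
    qed
  qed
  have ceQ: "AE \<omega> in M. real_cond_exp M (filt M A (t - 1)) Q \<omega>
      = al * (s2 * (\<Sum>a\<in>K. R a \<omega> * R a \<omega>)) - be * (m3 * (\<Sum>a\<in>K. R a \<omega> * R a \<omega> * R a \<omega>))"
  proof -
    have i1: "integrable M (\<lambda>\<omega>. - h * S1 \<omega>)" "integrable M (\<lambda>\<omega>. al * S2 \<omega>)" "integrable M (\<lambda>\<omega>. be * S3 \<omega>)"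
      using c1(1) c2(1) c3(1) by auto
    have i2: "integrable M (\<lambda>\<omega>. - h * S1 \<omega> + al * S2 \<omega>)" using i1 by auto
    have a1: "AE \<omega> in M. real_cond_exp M (filt M A (t - 1)) Q \<omega>
        = real_cond_exp M (filt M A (t - 1)) (\<lambda>\<omega>. - h * S1 \<omega> + al * S2 \<omega>) \<omega> - real_cond_exp M (filt M A (t - 1)) (\<lambda>\<omega>. be * S3 \<omega>) \<omega>"
      unfolding Q_def by (rule S.real_cond_exp_diff[OF i2 i1(3)])
    have a2: "AE \<omega> in M. real_cond_exp M (filt M A (t - 1)) (\<lambda>\<omega>. - h * S1 \<omega> + al * S2 \<omega>) \<omega>
        = real_cond_exp M (filt M A (t - 1)) (\<lambda>\<omega>. - h * S1 \<omega>) \<omega> + real_cond_exp M (filt M A (t - 1)) (\<lambda>\<omega>. al * S2 \<omega>) \<omega>"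
      by (rule S.real_cond_exp_add[OF i1(1) i1(2)])
    have m1: "AE \<omega> in M. real_cond_exp M (filt M A (t - 1)) (\<lambda>\<omega>. - h * S1 \<omega>) \<omega> = - h * real_cond_exp M (filt M A (t - 1)) S1 \<omega>"
      by (rule S.real_cond_exp_cmult[OF c1(1)])
    have m2: "AE \<omega> in M. real_cond_exp M (filt M A (t - 1)) (\<lambda>\<omega>. al * S2 \<omega>) \<omega> = al * real_cond_exp M (filt M A (t - 1)) S2 \<omega>"
      by (rule S.real_cond_exp_cmult[OF c2(1)])
    have m3': "AE \<omega> in M. real_cond_exp M (filt M A (t - 1)) (\<lambda>\<omega>. be * S3 \<omega>) \<omega> = be * real_cond_exp M (filt M A (t - 1)) S3 \<omega>"
      by (rule S.real_cond_exp_cmult[OF c3(1)])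
    show ?thesis using a1 a2 m1 m2 m3' e1 e2 e3 by eventually_elim simp
  qed
  have mono: "AE \<omega> in M. real_cond_exp M (filt M A (t - 1)) Q \<omega> \<le> real_cond_exp M (filt M A (t - 1)) LHS \<omega>"
  proof (rule S.real_cond_exp_mono[OF _ intQ intLHS])
    show "AE \<omega> in M. Q \<omega> \<le> LHS \<omega>" using AE_good by eventually_elim (rule pw)
  qed
  show ?thesis
    using AE_good mono ceQ
  proof eventually_elim
    case (elim \<omega>)
    define a2 where "a2 = (\<Sum>a\<in>K. R a \<omega> * R a \<omega>)"
    define a3 where "a3 = (\<Sum>a\<in>K. R a \<omega> * R a \<omega> * R a \<omega>)"
    have a30: "0 \<le> a3" unfolding a3_def using R01 by (intro sum_nonneg) simp
    have a32: "a3 \<le> a2" unfolding a3_def a2_def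
    proof (rule sum_mono)
      fix a
      have "R a \<omega> * R a \<omega> * R a \<omega> \<le> R a \<omega> * R a \<omega> * 1"
        using R01 by (intro mult_left_mono) auto
      then show "R a \<omega> * R a \<omega> * R a \<omega> \<le> R a \<omega> * R a \<omega>" by simp
    qed
    have rho: "infsum (\<lambda>x. (rho_star A M0 (t - 1) \<omega> x)\<^sup>2) UNIV = a2"
    proof -
      have "infsum (\<lambda>x. (rho_star A M0 (t - 1) \<omega> x)\<^sup>2) UNIV = (\<Sum>x\<in>K. (rho_star A M0 (t - 1) \<omega> x)\<^sup>2)"
        by (rule infsum_finite_support[OF finK]) (simp add: good_rho[OF elim(1)] good_Rc_out[OF elim(1)] K_def)
      then show ?thesis unfolding a2_def R_def using good_rho[OF elim(1)] by (simp add: power2_eq_square)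
    qed
    have "cst h * a2 \<le> kc h * (1 - 2 / Lc) * (s2 * a2) - kc h / Lc * (m3 * a3)"
      by (rule coef_ineq[OF h a30 a32])
    also have "\<dots> = real_cond_exp M (filt M A (t - 1)) Q \<omega>"
      using elim(3) unfolding a2_def a3_def al_def be_def by simp
    also have "\<dots> \<le> real_cond_exp M (filt M A (t - 1)) LHS \<omega>" using elim(2) .
    finally show ?case unfolding rho LHS_def .
  qed
qed

end

theorem lemma4p4:
  fixes M :: "'w measure"
    and A :: "nat \<Rightarrow> 'w \<Rightarrow> int^'d \<Rightarrow> int^'d \<Rightarrow> real"
    and M0 :: "int^'d \<Rightarrow> real"
    and h :: real
  assumes prob: "prob_space M"
    \<comment> \<open>A_1, A_2, ... i.i.d. random matrices\<close>
    and indep: "prob_space.indep_vars M (\<lambda>_. mat_space) (\<lambda>t. mat_of (A t)) {1..}"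
    and ident: "\<And>t. t \<ge> 1 \<Longrightarrow> distr M mat_space (mat_of (A t)) = distr M mat_space (mat_of (A 1))"
    \<comment> \<open>(i) nonnegativity\<close>
    and nonneg: "\<And>x y. AE \<omega> in M. A 1 \<omega> x y \<ge> 0"
    \<comment> \<open>(ii) independent columns\<close>
    and cols: "prob_space.indep_vars M (\<lambda>_. col_space) (\<lambda>y \<omega>. (\<lambda>x. A 1 \<omega> x y)) UNIV"
    \<comment> \<open>(iii) square integrability\<close>
    and sq: "\<And>x y. integrable M (\<lambda>\<omega>. (A 1 \<omega> x y)\<^sup>2)"
    \<comment> \<open>(iv) finite range\<close>
    and range: "\<exists>r::nat. \<forall>x y. norm1 (x - y) > int r \<longrightarrow> (AE \<omega> in M. A 1 \<omega> x y = 0)"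
    \<comment> \<open>(v) shift invariance\<close>
    and shift: "\<And>z. distr M mat_space (\<lambda>\<omega>. \<lambda>(x, y). A 1 \<omega> (x + z) (y + z))
                   = distr M mat_space (mat_of (A 1))"
    \<comment> \<open>(vi) nondegeneracy\<close>
    and basis: "\<exists>B. B \<subseteq> {x. infsum (\<lambda>y. mean_a M A (x + y) * mean_a M A y) UNIV \<noteq> 0}
                   \<and> independent (real_vec ` B) \<and> span (real_vec ` B) = UNIV"
    \<comment> \<open>initial condition of the dual process\<close>
    and M0_nonneg: "\<And>x. M0 x \<ge> 0"
    and M0_fin: "finite {x. M0 x > 0}"
    and M0_ne: "{x. M0 x > 0} \<noteq> {}"
    \<comment> \<open>hypotheses of the lemma\<close>
    and cube: "\<And>y. integrable M (\<lambda>\<omega>. (A 1 \<omega> 0 y) ^ 3)"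
    and nonconst: "\<not> (\<exists>c. AE \<omega> in M. infsum (\<lambda>x. A 1 \<omega> x 0) UNIV = c)"
    and h: "0 < h" "h < 1"
  shows "\<exists>c>0. AE \<omega> in M. \<forall>t\<ge>1.
           real_cond_exp M (filt M A (t - 1)) (\<lambda>\<omega>'. 1 - V_t M A M0 t \<omega>' powr h) \<omega>
             \<ge> c * infsum (\<lambda>x. (rho_star A M0 (t - 1) \<omega> x)\<^sup>2) UNIV"
  proof -
  obtain r :: nat where r: "\<forall>x y. norm1 (x - y) > int r \<longrightarrow> (AE \<omega> in M. A 1 \<omega> x y = 0)"
    using range by blast
  interpret LS M A M0 r
  proof (rule LS.intro[OF prob], rule LS_axioms.intro)
    show "\<And>x y. int r < norm1 (x - y) \<Longrightarrow> AE \<omega> in M. A 1 \<omega> x y = 0" using r by blast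
  qed (fact indep ident nonneg cols shift M0_nonneg M0_fin cube nonconst)+
  have "\<forall>t. AE \<omega> in M. t \<ge> 1 \<longrightarrow> real_cond_exp M (filt M A (t - 1)) (\<lambda>\<omega>'. 1 - V_t M A M0 t \<omega>' powr h) \<omega>
             \<ge> cst h * infsum (\<lambda>x. (rho_star A M0 (t - 1) \<omega> x)\<^sup>2) UNIV"
  proof
    fix t :: nat
    show "AE \<omega> in M. t \<ge> 1 \<longrightarrow> real_cond_exp M (filt M A (t - 1)) (\<lambda>\<omega>'. 1 - V_t M A M0 t \<omega>' powr h) \<omega>
             \<ge> cst h * infsum (\<lambda>x. (rho_star A M0 (t - 1) \<omega> x)\<^sup>2) UNIV"
    proof (cases "t \<ge> 1")
      case True
      show ?thesis using main_t[OF h(1) h(2) True] by eventually_elim simp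
    next
      case False
      then show ?thesis by simp
    qed
  qed
  then have "AE \<omega> in M. \<forall>t\<ge>1. real_cond_exp M (filt M A (t - 1)) (\<lambda>\<omega>'. 1 - V_t M A M0 t \<omega>' powr h) \<omega>
             \<ge> cst h * infsum (\<lambda>x. (rho_star A M0 (t - 1) \<omega> x)\<^sup>2) UNIV"
    by (simp add: AE_all_countable)
  then show ?thesis using cst_pos[OF h(1) h(2)] by blast
qed

end
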